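(* Let $B\in\mathbb{F}_q[T]$ be such that $y^2=x^3+B$ is a minimal Weierstrass equation of an elliptic curve over $\mathbb{F}_q(T)$. Then for $n\ge1$, $$\frac1{|\mathcal{F}_N(B)|}\sum_{D\in\mathcal{F}_N(B)}n\sum_{d\mid n}\deg(D_{n/d})\ll n\tau(n),$$ where $\tau$ is the divisor function.
   Context: Fix a prime $p\neq2,3$ and $q=p^r$ with $q\equiv1\pmod6$; primes are monic irreducible polynomials in $\mathbb{F}_q[T]$. $\mathcal{F}_N(B)$ is the set of monic cube-free $D\in\mathbb{F}_q[T]$ with $\gcd(D,B)=1$, $\deg(\mathrm{rad}\,D)=N$ and $\deg D\equiv0\pmod3$. For $D\in\mathbb{F}_q[T]$ and $k>0$, $D_k=\prod_{P\mid D,\ \deg P=k}P$ (and $D_k=1$ if $k$ is not a positive integer, i.e. the corresponding term is $0$). The implied constant may depend on $B$. *)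

theory Defs
  imports "HOL-Computational_Algebra.Computational_Algebra" "HOL-Library.Cardinality"
begin

text \<open>Primes of F_q[T] are the monic irreducible polynomials, i.e. the elements
  with prime P in the normalized factorial ring 'a poly (normalize = make monic).\<close>

definition cube_free :: "'a::{field_gcd,finite} poly \<Rightarrow> bool" where
  "cube_free D \<longleftrightarrow> (\<forall>P. prime P \<longrightarrow> \<not> P ^ 3 dvd D)"

definition rad_poly :: "'a::{field_gcd,finite} poly \<Rightarrow> 'a poly" where
  "rad_poly D = (\<Prod>P\<in>prime_factors D. P)"

definition Dk :: "'a::{field_gcd,finite} poly \<Rightarrow> nat \<Rightarrow> 'a poly" where
  "Dk D k = (\<Prod>P\<in>{P \<in> prime_factors D. degree P = k}. P)"

definition FN :: "'a::{field_gcd,finite} poly \<Rightarrow> nat \<Rightarrow> 'a poly set" where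
  "FN B N = {D. lead_coeff D = 1 \<and> cube_free D \<and> coprime D B \<and>
                degree (rad_poly D) = N \<and> degree D mod 3 = 0}"

text \<open>y^2 = x^3 + B (B in F_q[T]) is a minimal Weierstrass equation of an elliptic curve:
  Delta = -432 B^2 nonzero and, since c4 = 0 and char not 2,3, minimality at every prime P
  means v_P(Delta) < 12, i.e. v_P(B) < 6.\<close>
definition minimal_weierstrass_j0 :: "'a::{field_gcd,finite} poly \<Rightarrow> bool" where
  "minimal_weierstrass_j0 B \<longleftrightarrow> B \<noteq> 0 \<and> (\<forall>P. prime P \<longrightarrow> \<not> P ^ 6 dvd B)"

definition tau :: "nat \<Rightarrow> nat" where
  "tau n = card {d. d dvd n}"

end

theory Submission
  imports Defs
begin


definition Vp :: "nat \<Rightarrow> 'a::{field_gcd,finite} poly set" where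
  "Vp j = {p. \<forall>i\<ge>j. coeff p i = 0}"

definition Mon :: "nat \<Rightarrow> 'a::{field_gcd,finite} poly set" where
  "Mon m = {p. lead_coeff p = 1 \<and> degree p = m}"

lemma card_Vp: "card (Vp j :: 'a::{field_gcd,finite} poly set) = CARD('a) ^ j \<and> finite (Vp j :: 'a poly set)"
proof -
  let ?L = "{xs::'a list. set xs \<subseteq> UNIV \<and> length xs = j}"
  have bij: "bij_betw (\<lambda>p. map (coeff p) [0..<j]) (Vp j) ?L"
  proof (rule bij_betw_byWitness[where f' = Poly])
    show "\<forall>p\<in>(Vp j :: 'a poly set). Poly (map (coeff p) [0..<j]) = p"
    proof
      fix p :: "'a poly" assume "p \<in> Vp j"
      then have z: "\<forall>i\<ge>j. coeff p i = 0" by (simp add: Vp_def)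
      show "Poly (map (coeff p) [0..<j]) = p"
        by (rule poly_eqI) (use z in \<open>auto simp: coeff_Poly_eq nth_default_def\<close>)
    qed
    show "\<forall>xs\<in>?L. map (coeff (Poly xs)) [0..<j] = xs"
      by (auto simp: coeff_Poly_eq nth_default_def intro: nth_equalityI)
    show "(\<lambda>p. map (coeff p) [0..<j]) ` (Vp j :: 'a poly set) \<subseteq> ?L" by auto
    show "Poly ` ?L \<subseteq> (Vp j :: 'a poly set)"
      by (auto simp: Vp_def coeff_Poly_eq nth_default_def)
  qed
  have "card ?L = CARD('a) ^ j" using card_lists_length_eq[of "UNIV::'a set" j] by simp
  moreover have "finite ?L" using finite_lists_length_eq[of "UNIV::'a set" j] by simp
  ultimately show ?thesis using bij_betw_same_card[OF bij] bij_betw_finite[OF bij] by simp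
qed

lemma card_Mon: "card (Mon m :: 'a::{field_gcd,finite} poly set) = CARD('a) ^ m \<and> finite (Mon m :: 'a poly set)"
proof -
  have bij: "bij_betw (\<lambda>p. monom 1 m + p) (Vp m) (Mon m :: 'a poly set)"
  proof (rule bij_betw_byWitness[where f' = "\<lambda>p. p - monom 1 m"])
    show "\<forall>p\<in>(Vp m :: 'a poly set). monom 1 m + p - monom 1 m = p" by simp
    show "\<forall>p\<in>(Mon m :: 'a poly set). monom 1 m + (p - monom 1 m) = p" by simp
    show "(\<lambda>p. monom 1 m + p) ` (Vp m :: 'a poly set) \<subseteq> Mon m"
    proof
      fix x assume "x \<in> (\<lambda>p. monom 1 m + p) ` (Vp m :: 'a poly set)"
      then obtain p where p: "p \<in> Vp m" "x = monom 1 m + p" by auto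
      have c: "coeff x m = 1" using p by (simp add: Vp_def)
      have h: "\<forall>i>m. coeff x i = 0" using p by (simp add: Vp_def)
      have "degree x = m"
        by (metis c h degree_le le_antisym le_degree leI one_neq_zero)
      thus "x \<in> Mon m" using c by (simp add: Mon_def)
    qed
    show "(\<lambda>p. p - monom 1 m) ` (Mon m :: 'a poly set) \<subseteq> Vp m"
    proof
      fix x assume "x \<in> (\<lambda>p. p - monom 1 m) ` (Mon m :: 'a poly set)"
      then obtain p where p: "p \<in> Mon m" "x = p - monom 1 m" by auto
      show "x \<in> Vp m" unfolding Vp_def
      proof (intro CollectI allI impI)
        fix i assume "m \<le> i"
        then show "coeff x i = 0" using p
          by (cases "i = m") (auto simp: Mon_def coeff_eq_0)
      qed
    qed
  qed
  thus ?thesis using card_Vp[of m, where 'a='a] bij_betw_same_card[OF bij] bij_betw_finite[OF bij] by simp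
qed

lemma Mon_finite[simp]: "finite (Mon m :: 'a::{field_gcd,finite} poly set)"
  using card_Mon by blast

lemma Vp_finite[simp]: "finite (Vp m :: 'a::{field_gcd,finite} poly set)"
  using card_Vp by blast

lemma card_Mon_dvd:
  fixes G :: "'a::{field_gcd,finite} poly"
  assumes G: "lead_coeff G = 1" and le: "degree G \<le> n"
  shows "card {F \<in> Mon n. G dvd F} = CARD('a) ^ (n - degree G)"
proof -
  have G0: "G \<noteq> 0" using G by auto
  have bij: "bij_betw (\<lambda>H. G * H) (Mon (n - degree G)) {F \<in> Mon n. G dvd F}"
  proof (rule bij_betw_byWitness[where f' = "\<lambda>F. F div G"])
    show "\<forall>a\<in>(Mon (n - degree G) :: 'a poly set). G * a div G = a" using G0 by simp
    show "\<forall>a'\<in>{F \<in> Mon n. G dvd F}. G * (a' div G) = a'" by auto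
    show "(*) G ` Mon (n - degree G) \<subseteq> {F \<in> Mon n. G dvd F}"
    proof
      fix x assume "x \<in> (*) G ` Mon (n - degree G)"
      then obtain H where H: "H \<in> Mon (n - degree G)" "x = G * H" by auto
      have H0: "H \<noteq> 0" using H by (auto simp: Mon_def)
      have "lead_coeff x = lead_coeff G * lead_coeff H" using H(2) lead_coeff_mult by blast
      moreover have "lead_coeff H = 1" using H(1) unfolding Mon_def by blast
      ultimately have l: "lead_coeff x = 1" using G by (metis mult.left_neutral)
      have "degree x = degree G + degree H" using H(2) G0 H0 degree_mult_eq by blast
      then have "degree x = n" using H(1) le by (simp add: Mon_def)
      then show "x \<in> {F \<in> Mon n. G dvd F}" using l H(2) by (simp add: Mon_def)
    qed
    show "(\<lambda>F. F div G) ` {F \<in> Mon n. G dvd F} \<subseteq> Mon (n - degree G)"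
    proof
      fix x assume "x \<in> (\<lambda>F. F div G) ` {F \<in> Mon n. G dvd F}"
      then obtain F where F: "F \<in> Mon n" "G dvd F" "x = F div G" by auto
      then obtain H where H: "F = G * H" by auto
      have H0: "H \<noteq> 0" using F H by (auto simp: Mon_def)
      have "lead_coeff F = lead_coeff G * lead_coeff H" using H lead_coeff_mult by blast
      then have lH: "lead_coeff H = 1" using G F(1) by (simp add: Mon_def)
      have "degree F = degree G + degree H" using H G0 H0 degree_mult_eq by blast
      moreover have "degree F = n" using F(1) unfolding Mon_def by blast
      ultimately have dH: "degree H = n - degree G" by linarith
      have "x = H" using F H G0 by simp
      then show "x \<in> Mon (n - degree G)" using lH dH unfolding Mon_def by blast
    qed
  qed
  then show ?thesis using card_Mon[of "n - degree G", where 'a='a] bij_betw_same_card[OF bij] by simp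
qed

lemma card_Mon_dvd_real:
  fixes G :: "'a::{field_gcd,finite} poly"
  assumes G: "lead_coeff G = 1"
  shows "real (card {F \<in> Mon n. G dvd F}) \<le> real CARD('a) ^ n / real CARD('a) ^ degree G"
proof (cases "degree G \<le> n")
  case True
  have "real CARD('a) ^ n = real CARD('a) ^ (n - degree G) * real CARD('a) ^ degree G"
    using True by (simp flip: power_add)
  then show ?thesis using card_Mon_dvd[OF G True] by simp
next
  case False
  have "{F \<in> Mon n. G dvd F} = {}"
  proof (rule ccontr)
    assume "{F \<in> Mon n. G dvd F} \<noteq> {}"
    then obtain F where "F \<in> Mon n" "G dvd F" by auto
    then have "degree G \<le> n" by (metis (mono_tags, lifting) Mon_def dvd_imp_degree_le
        mem_Collect_eq one_neq_zero leading_coeff_0_iff)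
    with False show False by simp
  qed
  then show ?thesis by (metis card.empty of_nat_0 divide_nonneg_nonneg of_nat_0_le_iff zero_le_power)
qed

lemma Mon_diff_degree:
  fixes Q Q' :: "'a::{field_gcd,finite} poly"
  assumes "Q \<in> Mon m" "Q' \<in> Mon m" "Q \<noteq> Q'"
  shows "degree (Q - Q') < m"
proof -
  have c: "\<forall>i\<ge>m. coeff (Q - Q') i = 0"
  proof (intro allI impI)
    fix i assume "m \<le> i" then show "coeff (Q - Q') i = 0" using assms
      by (cases "i = m") (auto simp: Mon_def coeff_eq_0)
  qed
  have "Q - Q' \<noteq> 0" using assms by simp
  then have "lead_coeff (Q - Q') \<noteq> 0" by (rule leading_coeff_neq_0)
  with c show ?thesis by (meson not_le)
qed

lemma card_cong_le:
  fixes M B0 :: "'a::{field_gcd,finite} poly"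
  assumes M0: "M \<noteq> 0"
  shows "card {Q \<in> Mon m. M dvd Q * B0 + 1} \<le> CARD('a) ^ (m - degree M)"
proof (cases "{Q \<in> Mon m. M dvd Q * B0 + 1} = {}")
  case True then show ?thesis by (metis card.empty zero_le)
next
  case False
  then obtain Q1 where Q1: "Q1 \<in> Mon m" "M dvd Q1 * B0 + 1" by auto
  have cop: "coprime M B0"
  proof (rule coprimeI)
    fix c assume "c dvd M" "c dvd B0"
    then have "c dvd Q1 * B0 + 1" "c dvd Q1 * B0" using Q1 dvd_trans by auto
    then show "is_unit c" by (metis dvd_add_right_iff)
  qed
  have sub: "{Q \<in> Mon m. M dvd Q * B0 + 1} \<subseteq> (\<lambda>H. Q1 + M * H) ` Vp (m - degree M)"
  proof
    fix Q assume Q: "Q \<in> {Q \<in> Mon m. M dvd Q * B0 + 1}"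
    have "M dvd (Q * B0 + 1) - (Q1 * B0 + 1)" using Q Q1(2) by (intro dvd_diff) auto
    then have "M dvd (Q - Q1) * B0" by (simp add: algebra_simps)
    then have d: "M dvd (Q - Q1)" using cop by (simp add: coprime_dvd_mult_left_iff)
    define H where "H = (Q - Q1) div M"
    have QH: "Q = Q1 + M * H" using d by (simp add: H_def)
    have "H \<in> Vp (m - degree M)"
    proof (cases "Q = Q1")
      case True
      then have "H = 0" by (simp add: H_def)
      then show ?thesis by (simp add: Vp_def)
    next
      case False
      have dl: "degree (Q - Q1) < m" using Mon_diff_degree[OF _ Q1(1) False] Q by auto
      have H0: "H \<noteq> 0" using False QH by auto
      have "degree (Q - Q1) = degree M + degree H" using QH M0 H0
        by (simp add: degree_mult_eq)
      then have "degree H < m - degree M" using dl by linarith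
      then show ?thesis by (auto simp: Vp_def coeff_eq_0)
    qed
    then show "Q \<in> (\<lambda>H. Q1 + M * H) ` Vp (m - degree M)" using QH by auto
  qed
  have "card {Q \<in> Mon m. M dvd Q * B0 + 1} \<le> card ((\<lambda>H. Q1 + M * H) ` Vp (m - degree M))"
    by (rule card_mono[OF _ sub]) simp
  also have "\<dots> \<le> card (Vp (m - degree M) :: 'a poly set)" by (rule card_image_le) simp
  also have "\<dots> = CARD('a) ^ (m - degree M)" using card_Vp by blast
  finally show ?thesis .
qed

lemma uf1: "unit_factor (x::'a::field_gcd) = 1 \<Longrightarrow> x = 1"
  by (metis dvd_field_iff is_unit_unit_factor unit_factor_eq_0_iff)

lemma mon_norm: "lead_coeff (F::'a::{field_gcd,finite} poly) = 1 \<Longrightarrow> normalize F = F"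
  by (simp add: unit_factor_1_imp_normalized unit_factor_poly_def)

lemma prime_monic: "prime (F::'a::{field_gcd,finite} poly) \<Longrightarrow> lead_coeff F = 1"
proof -
  assume p: "prime F"
  then have "F \<noteq> 0" by auto
  have "normalize F = F" using p by simp
  then have "unit_factor F = 1" using \<open>F \<noteq> 0\<close>
    by (metis normalize_mult_unit_factor mult_cancel_left1 unit_factor_eq_0_iff)
  then have "[:unit_factor (lead_coeff F):] = 1" using \<open>F \<noteq> 0\<close> by (simp add: unit_factor_poly_def)
  then have "unit_factor (lead_coeff F) = 1" by (metis coeff_pCons_0 one_pCons)
  then show ?thesis by (rule uf1)
qed

lemma prime_deg: "prime (F::'a::{field_gcd,finite} poly) \<Longrightarrow> degree F \<ge> 1"
  by (metis is_unit_iff_degree less_one not_prime_0 not_prime_unit leI)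

definition Pr :: "nat \<Rightarrow> 'a::{field_gcd,finite} poly set" where
  "Pr d = {P. prime P \<and> degree P = d}"

definition Pl :: "nat \<Rightarrow> 'a::{field_gcd,finite} poly set" where
  "Pl d = {P. prime P \<and> degree P \<le> d}"

lemma Pr_sub: "Pr d \<subseteq> (Mon d :: 'a::{field_gcd,finite} poly set)"
  using prime_monic by (auto simp: Pr_def Mon_def)

lemma Pr_finite[simp]: "finite (Pr d :: 'a::{field_gcd,finite} poly set)"
  using Pr_sub finite_subset Mon_finite by metis

lemma Pr_card: "card (Pr d :: 'a::{field_gcd,finite} poly set) \<le> CARD('a) ^ d"
  using card_mono[OF Mon_finite Pr_sub] card_Mon by metis

lemma Pl_union: "Pl m = (\<Union>d\<in>{1..m}. (Pr d :: 'a::{field_gcd,finite} poly set))"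
  using prime_deg by (fastforce simp: Pl_def Pr_def)

lemma Pl_finite[simp]: "finite (Pl m :: 'a::{field_gcd,finite} poly set)"
  unfolding Pl_union by auto

lemma sum_Pl:
  "(\<Sum>P\<in>(Pl m :: 'a::{field_gcd,finite} poly set). g (degree P)) = (\<Sum>d\<in>{1..m}. real (card (Pr d :: 'a poly set)) * g d)"
proof -
  have "(\<Sum>P\<in>(Pl m :: 'a poly set). g (degree P)) = (\<Sum>d\<in>{1..m}. \<Sum>P\<in>(Pr d :: 'a poly set). g (degree P))"
    unfolding Pl_union by (rule sum.UNION_disjoint) (auto simp: Pr_def[symmetric], auto simp: Pr_def)
  also have "\<dots> = (\<Sum>d\<in>{1..m}. real (card (Pr d :: 'a poly set)) * g d)"
    by (rule sum.cong) (auto simp: Pr_def)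
  finally show ?thesis .
qed

lemma deg_formula:
  fixes F :: "'a::{field_gcd,finite} poly"
  assumes "lead_coeff F = 1"
  shows "degree F = (\<Sum>P\<in>prime_factors F. multiplicity P F * degree P)"
proof -
  have F0: "F \<noteq> 0" using assms by auto
  have "F = normalize F" using mon_norm[OF assms] by simp
  also have "\<dots> = prod_mset (prime_factorization F)" using prod_mset_prime_factorization[OF F0] by simp
  also have "\<dots> = (\<Prod>P\<in>prime_factors F. P ^ count (prime_factorization F) P)"
    by (rule prod_mset_multiplicity)
  also have "\<dots> = (\<Prod>P\<in>prime_factors F. P ^ multiplicity P F)"
    by (rule prod.cong) (auto simp: count_prime_factorization_prime in_prime_factors_imp_prime)
  finally have e: "F = (\<Prod>P\<in>prime_factors F. P ^ multiplicity P F)" .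
  have "degree (\<Prod>P\<in>prime_factors F. P ^ multiplicity P F) = (\<Sum>P\<in>prime_factors F. degree (P ^ multiplicity P F))"
    by (rule degree_prod_sum_eq) auto
  also have "\<dots> = (\<Sum>P\<in>prime_factors F. multiplicity P F * degree P)"
    by (rule sum.cong) (auto simp: degree_power_eq dest: in_prime_factors_imp_prime)
  finally show ?thesis using e by simp
qed

lemma card_Mon_dvd_nat:
  fixes G :: "'a::{field_gcd,finite} poly"
  assumes G: "lead_coeff G = 1"
  shows "card {F \<in> Mon n. G dvd F} = (if degree G \<le> n then CARD('a) ^ (n - degree G) else 0)"
proof (cases "degree G \<le> n")
  case True
  then show ?thesis using card_Mon_dvd[OF G True] by simp
next
  case False
  have "{F \<in> Mon n. G dvd F} = {}"
  proof (rule ccontr)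
    assume "{F \<in> Mon n. G dvd F} \<noteq> {}"
    then obtain F where "F \<in> Mon n" "G dvd F" by auto
    then have "degree G \<le> n" by (metis (mono_tags, lifting) Mon_def dvd_imp_degree_le
        mem_Collect_eq one_neq_zero leading_coeff_0_iff)
    with False show False by simp
  qed
  then show ?thesis using False by simp
qed

lemma mult_card:
  fixes F P :: "'a::{field_gcd,finite} poly"
  assumes P: "prime P" and F: "F \<in> Mon n" and nm: "n \<le> m"
  shows "multiplicity P F = card {j \<in> {1..m}. P ^ j dvd F}"
proof -
  have F0: "F \<noteq> 0" using F by (auto simp: Mon_def)
  have Pu: "\<not> is_unit P" using P by auto
  have P0: "P \<noteq> 0" using P by auto
  have "P ^ multiplicity P F dvd F" by (rule multiplicity_dvd)
  then have "degree (P ^ multiplicity P F) \<le> degree F" using F0 by (rule dvd_imp_degree_le)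
  then have "multiplicity P F * degree P \<le> n" using F P0 by (simp add: degree_power_eq Mon_def)
  moreover have "degree P \<ge> 1" using prime_deg[OF P] .
  ultimately have mle: "multiplicity P F \<le> n"
    using mult_le_mono2[of 1 "degree P" "multiplicity P F"] by linarith
  have "{j \<in> {1..m}. P ^ j dvd F} = {1..multiplicity P F}"
  proof (intro set_eqI iffI)
    fix j assume "j \<in> {j \<in> {1..m}. P ^ j dvd F}"
    then show "j \<in> {1..multiplicity P F}" using power_dvd_iff_le_multiplicity[OF F0 Pu, of j] by auto
  next
    fix j assume "j \<in> {1..multiplicity P F}"
    then show "j \<in> {j \<in> {1..m}. P ^ j dvd F}" using power_dvd_iff_le_multiplicity[OF F0 Pu, of j] mle nm by auto
  qed
  then show ?thesis by simp
qed

lemma deg_sum: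
  fixes F :: "'a::{field_gcd,finite} poly"
  assumes F: "F \<in> Mon n" and nm: "n \<le> m"
  shows "degree F = (\<Sum>P\<in>Pl m. \<Sum>j\<in>{1..m}. if P ^ j dvd F then degree P else 0)"
proof -
  have lc: "lead_coeff F = 1" and dF: "degree F = n" using F by (auto simp: Mon_def)
  have F0: "F \<noteq> 0" using lc by auto
  have "degree F = (\<Sum>P\<in>prime_factors F. multiplicity P F * degree P)" by (rule deg_formula[OF lc])
  also have "\<dots> = (\<Sum>P\<in>Pl m. multiplicity P F * degree P)"
  proof (rule sum.mono_neutral_left)
    show "finite (Pl m :: 'a poly set)" by simp
    show "prime_factors F \<subseteq> Pl m"
    proof
      fix P assume "P \<in> prime_factors F"
      then have "prime P" "P dvd F" by (auto dest: in_prime_factors_imp_prime in_prime_factors_imp_dvd)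
      then have "degree P \<le> n" using dvd_imp_degree_le[OF _ F0] dF by auto
      then show "P \<in> Pl m" using \<open>prime P\<close> nm by (auto simp: Pl_def)
    qed
    show "\<forall>i\<in>Pl m - prime_factors F. multiplicity i F * degree i = 0"
    proof
      fix P assume "P \<in> Pl m - prime_factors F"
      then have "prime P" "\<not> P dvd F" using F0 by (auto simp: Pl_def in_prime_factors_iff)
      then show "multiplicity P F * degree P = 0" by (simp add: not_dvd_imp_multiplicity_0)
    qed
  qed
  also have "\<dots> = (\<Sum>P\<in>Pl m. \<Sum>j\<in>{1..m}. if P ^ j dvd F then degree P else 0)"
  proof (rule sum.cong)
    fix P assume "P \<in> (Pl m :: 'a poly set)"
    then have P: "prime P" by (simp add: Pl_def)
    have "(\<Sum>j\<in>{1..m}. if P ^ j dvd F then degree P else 0) = (\<Sum>j\<in>{j \<in> {1..m}. P ^ j dvd F}. degree P)"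
      by (rule sum.inter_filter[symmetric]) simp
    also have "\<dots> = multiplicity P F * degree P" using mult_card[OF P F nm] by simp
    finally show "multiplicity P F * degree P = (\<Sum>j\<in>{1..m}. if P ^ j dvd F then degree P else 0)" by simp
  qed simp
  finally show ?thesis .
qed

definition fT :: "nat \<Rightarrow> nat \<Rightarrow> 'a::{field_gcd,finite} poly \<Rightarrow> nat \<Rightarrow> nat" where
  "fT n q P j = (if j * degree P \<le> n then degree P * q ^ (n - j * degree P) else 0)"

lemma T_identity:
  assumes nm: "n \<le> m"
  shows "n * CARD('a) ^ n = (\<Sum>P\<in>(Pl m :: 'a::{field_gcd,finite} poly set). \<Sum>j\<in>{1..m}. fT n CARD('a) P j)"
proof -
  have "n * CARD('a) ^ n = (\<Sum>F\<in>(Mon n :: 'a poly set). degree F)"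
    using card_Mon[of n, where 'a='a] by (simp add: Mon_def)
  also have "\<dots> = (\<Sum>F\<in>(Mon n :: 'a poly set). \<Sum>P\<in>Pl m. \<Sum>j\<in>{1..m}. if P ^ j dvd F then degree P else 0)"
    by (rule sum.cong[OF refl]) (rule deg_sum[OF _ nm])
  also have "\<dots> = (\<Sum>P\<in>(Pl m :: 'a poly set). \<Sum>F\<in>Mon n. \<Sum>j\<in>{1..m}. if P ^ j dvd F then degree P else 0)"
    by (rule sum.swap)
  also have "\<dots> = (\<Sum>P\<in>(Pl m :: 'a poly set). \<Sum>j\<in>{1..m}. \<Sum>F\<in>Mon n. if P ^ j dvd F then degree P else 0)"
    by (rule sum.cong[OF refl], rule sum.swap)
  also have "\<dots> = (\<Sum>P\<in>(Pl m :: 'a poly set). \<Sum>j\<in>{1..m}. fT n CARD('a) P j)"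
  proof (rule sum.cong[OF refl], rule sum.cong[OF refl])
    fix P j assume P: "P \<in> (Pl m :: 'a poly set)"
    then have Pp: "prime P" by (simp add: Pl_def)
    then have P0: "P \<noteq> 0" by auto
    have lc: "lead_coeff (P ^ j) = 1" using prime_monic[OF Pp] by (simp add: lead_coeff_power)
    have "(\<Sum>F\<in>(Mon n :: 'a poly set). if P ^ j dvd F then degree P else 0) = (\<Sum>F\<in>{F \<in> Mon n. P ^ j dvd F}. degree P)"
      by (rule sum.inter_filter[symmetric]) simp
    also have "\<dots> = card {F \<in> Mon n. P ^ j dvd F} * degree P" by simp
    also have "\<dots> = fT n CARD('a) P j"
      unfolding card_Mon_dvd_nat[OF lc] fT_def using P0 by (simp add: degree_power_eq mult.commute)
    finally show "(\<Sum>F\<in>(Mon n :: 'a poly set). if P ^ j dvd F then degree P else 0) = fT n CARD('a) P j" .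
  qed
  finally show ?thesis .
qed

lemma prime_count:
  "n * card (Pr n :: 'a::{field_gcd,finite} poly set) \<le> CARD('a) ^ n"
proof (cases "n = 0")
  case True then show ?thesis by simp
next
  case False
  let ?q = "CARD('a)"
  define g where "g = (\<lambda>(P::'a poly) j. if j * degree P = n then degree P else 0)"
  have pt: "fT n ?q P j = g P j + ?q * fT (n - 1) ?q P j" for P :: "'a poly" and j
  proof -
    consider "j * degree P \<le> n - 1" | "j * degree P = n" | "j * degree P > n" using False by linarith
    then show ?thesis
    proof cases
      case 1
      then have "n - j * degree P = Suc (n - 1 - j * degree P)" using False by linarith
      then show ?thesis using 1 False by (simp add: fT_def g_def)
    next
      case 2 then show ?thesis using False by (simp add: fT_def g_def)
    next
      case 3 then show ?thesis by (simp add: fT_def g_def)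
    qed
  qed
  have T1: "n * ?q ^ n = (\<Sum>P\<in>(Pl n :: 'a poly set). \<Sum>j\<in>{1..n}. fT n ?q P j)" by (rule T_identity) simp
  have T2: "(n - 1) * ?q ^ (n - 1) = (\<Sum>P\<in>(Pl n :: 'a poly set). \<Sum>j\<in>{1..n}. fT (n - 1) ?q P j)" by (rule T_identity) simp
  have S: "(\<Sum>P\<in>(Pl n :: 'a poly set). \<Sum>j\<in>{1..n}. fT n ?q P j) = (\<Sum>P\<in>(Pl n :: 'a poly set). \<Sum>j\<in>{1..n}. g P j) + ?q * (\<Sum>P\<in>(Pl n :: 'a poly set). \<Sum>j\<in>{1..n}. fT (n - 1) ?q P j)"
    by (simp only: pt sum.distrib sum_distrib_left)
  have "n * ?q ^ n = (\<Sum>P\<in>(Pl n :: 'a poly set). \<Sum>j\<in>{1..n}. g P j) + ?q * ((n - 1) * ?q ^ (n - 1))"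
    using T1 T2 S by simp
  also have "?q * ((n - 1) * ?q ^ (n - 1)) = (n - 1) * ?q ^ n"
    using False by (cases n) (auto simp: algebra_simps)
  finally have G0: "n * ?q ^ n = (\<Sum>P\<in>(Pl n :: 'a poly set). \<Sum>j\<in>{1..n}. g P j) + (n - 1) * ?q ^ n" .
  have "n * ?q ^ n = ?q ^ n + (n - 1) * ?q ^ n" using False by (cases n) auto
  with G0 have G: "(\<Sum>P\<in>(Pl n :: 'a poly set). \<Sum>j\<in>{1..n}. g P j) = ?q ^ n" by linarith
  have "n * card (Pr n :: 'a poly set) = (\<Sum>P\<in>(Pr n :: 'a poly set). g P 1)"
    by (simp add: g_def Pr_def)
  also have "\<dots> \<le> (\<Sum>P\<in>(Pr n :: 'a poly set). \<Sum>j\<in>{1..n}. g P j)"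
    by (rule sum_mono) (rule member_le_sum, use False in auto)
  also have "\<dots> \<le> (\<Sum>P\<in>(Pl n :: 'a poly set). \<Sum>j\<in>{1..n}. g P j)"
    by (rule sum_mono2[OF Pl_finite]) (auto simp: Pr_def Pl_def)
  finally show ?thesis using G by simp
qed



lemma mult_rad:
  fixes D P :: "'a::{field_gcd,finite} poly"
  assumes P: "prime P"
  shows "multiplicity P (rad_poly D) = (if P \<in> prime_factors D then 1 else 0)"
proof -
  have e: "rad_poly D = (\<Prod>Q\<in>prime_factors D. Q ^ (\<lambda>_. 1::nat) Q)" by (simp add: rad_poly_def)
  have "multiplicity P (\<Prod>Q\<in>prime_factors D. Q ^ (\<lambda>_. 1::nat) Q) = (if P \<in> prime_factors D then 1 else 0)"
    by (rule multiplicity_prod_prime_powers) (auto simp: P dest: in_prime_factors_imp_prime)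
  then show ?thesis using e by simp
qed

lemma rad_nonzero: "rad_poly (D::'a::{field_gcd,finite} poly) \<noteq> 0"
  unfolding rad_poly_def by (auto dest: in_prime_factors_imp_prime)

lemma rad_monic: "lead_coeff (rad_poly (D::'a::{field_gcd,finite} poly)) = 1"
  unfolding rad_poly_def lead_coeff_prod by (rule prod.neutral) (auto intro: prime_monic dest: in_prime_factors_imp_prime)

lemma rad_decomp:
  fixes D :: "'a::{field_gcd,finite} poly"
  assumes D0: "D \<noteq> 0" and cf: "cube_free D"
  shows "rad_poly D dvd D" "D div rad_poly D dvd rad_poly D"
proof -
  let ?R = "rad_poly D"
  have R0: "?R \<noteq> 0" by (rule rad_nonzero)
  show RD: "?R dvd D"
  proof (rule multiplicity_le_imp_dvd[OF R0])
    fix P :: "'a poly" assume P: "prime P"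
    show "multiplicity P ?R \<le> multiplicity P D"
    proof (cases "P \<in> prime_factors D")
      case True
      then have "P dvd D" by auto
      then have "1 \<le> multiplicity P D" using D0 P
        by (intro multiplicity_geI) auto
      then show ?thesis using mult_rad[OF P] True by simp
    next
      case False then show ?thesis using mult_rad[OF P] by simp
    qed
  qed
  define E where "E = D div ?R"
  have DE: "D = ?R * E" using RD by (simp add: E_def)
  have E0: "E \<noteq> 0" using DE D0 by auto
  show "D div ?R dvd ?R"
    unfolding E_def[symmetric]
  proof (rule multiplicity_le_imp_dvd[OF E0])
    fix P :: "'a poly" assume P: "prime P"
    have md: "multiplicity P D = multiplicity P ?R + multiplicity P E"
      using DE prime_elem_multiplicity_mult_distrib[of P ?R E] P R0 E0 by simp
    have "\<not> P ^ 3 dvd D" using cf P by (simp add: cube_free_def)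
    then have "multiplicity P D < 3" using D0 P
      by (intro multiplicity_lessI) auto
    show "multiplicity P E \<le> multiplicity P ?R"
    proof (cases "P \<in> prime_factors D")
      case True
      then show ?thesis using mult_rad[OF P] md \<open>multiplicity P D < 3\<close> by simp
    next
      case False
      then have "\<not> P dvd D" using D0 P by (auto simp: in_prime_factors_iff)
      then have "multiplicity P D = 0" by (rule not_dvd_imp_multiplicity_0)
      then show ?thesis using md by simp
    qed
  qed
qed

definition Pairs :: "nat \<Rightarrow> ('a::{field_gcd,finite} poly \<times> 'a poly) set" where
  "Pairs N = (\<Union>a\<in>{0..N}. Mon a \<times> Mon (N - a))"

lemma FN_cover:
  fixes B :: "'a::{field_gcd,finite} poly"
  assumes D: "D \<in> FN B N"
  shows "\<exists>A C. (A, C) \<in> Pairs N \<and> D = A * C * C \<and> A * C = rad_poly D"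
proof -
  let ?R = "rad_poly D"
  have lc: "lead_coeff D = 1" and cf: "cube_free D" and dR: "degree ?R = N"
    using D by (auto simp: FN_def)
  have D0: "D \<noteq> 0" using lc by auto
  define E where "E = D div ?R"
  have RD: "?R dvd D" and ER: "E dvd ?R" using rad_decomp[OF D0 cf] by (auto simp: E_def)
  have DE: "D = ?R * E" using RD by (simp add: E_def)
  define A where "A = ?R div E"
  have RA: "?R = A * E" using ER by (simp add: A_def)
  have R0: "?R \<noteq> 0" by (rule rad_nonzero)
  have A0: "A \<noteq> 0" and E0: "E \<noteq> 0" using RA R0 by auto
  have "lead_coeff D = lead_coeff ?R * lead_coeff E" using DE lead_coeff_mult by metis
  then have lE: "lead_coeff E = 1" using lc rad_monic[of D] by simp
  have "lead_coeff ?R = lead_coeff A * lead_coeff E" using RA lead_coeff_mult by metis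
  then have lA: "lead_coeff A = 1" using lE rad_monic[of D] by simp
  have "degree ?R = degree A + degree E" using RA A0 E0 degree_mult_eq by metis
  then have "(A, E) \<in> Pairs N" using lA lE dR unfolding Pairs_def Mon_def
    by (intro UN_I[of "degree A"]) auto
  moreover have "D = A * E * E" using DE RA by simp
  ultimately show ?thesis using RA[symmetric] by blast
qed

lemma Pairs_finite[simp]: "finite (Pairs N :: ('a::{field_gcd,finite} poly \<times> 'a poly) set)"
  unfolding Pairs_def by (intro finite_UN_I finite_cartesian_product) auto

lemma FN_finite: "finite (FN (B::'a::{field_gcd,finite} poly) N)"
proof -
  have "FN B N \<subseteq> (\<lambda>(A, C). A * C * C) ` Pairs N"
  proof
    fix D assume "D \<in> FN B N"
    then obtain A C where AC: "(A, C) \<in> Pairs N" "D = A * C * C" using FN_cover by blast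
    then show "D \<in> (\<lambda>(A, C). A * C * C) ` Pairs N" by force
  qed
  then show ?thesis by (rule finite_subset) simp
qed

lemma card_FN_dvd:
  fixes B P :: "'a::{field_gcd,finite} poly"
  assumes P: "prime P"
  shows "real (card {D \<in> FN B N. P dvd D}) \<le> 2 * (real N + 1) * real CARD('a) ^ N / real CARD('a) ^ degree P"
proof -
  let ?q = "real CARD('a)"
  let ?S = "\<Union>a\<in>{0..N}. ({A \<in> Mon a. P dvd A} \<times> Mon (N - a) \<union> Mon a \<times> {C \<in> Mon (N - a). P dvd C})"
  have sub: "{D \<in> FN B N. P dvd D} \<subseteq> (\<lambda>(A, C). A * C * C) ` ?S"
  proof
    fix D assume D: "D \<in> {D \<in> FN B N. P dvd D}"
    then obtain A C where AC: "(A, C) \<in> Pairs N" "D = A * C * C" "A * C = rad_poly D"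
      using FN_cover by blast
    have "D \<noteq> 0" using D by (auto simp: FN_def)
    then have "P \<in> prime_factors D" using D P by (auto simp: in_prime_factors_iff)
    then have "P dvd rad_poly D" unfolding rad_poly_def by (intro dvd_prodI) auto
    then have "P dvd A \<or> P dvd C" using AC(3) P by (metis prime_elem_dvd_mult_iff prime_imp_prime_elem)
    then have "(A, C) \<in> ?S" using AC(1) unfolding Pairs_def by auto
    then show "D \<in> (\<lambda>(A, C). A * C * C) ` ?S" using AC(2) by force
  qed
  have finS: "finite ?S" by auto
  have "card {D \<in> FN B N. P dvd D} \<le> card ((\<lambda>(A, C). A * C * C) ` ?S)"
    by (rule card_mono[OF _ sub]) (use finS in auto)
  also have "\<dots> \<le> card ?S" by (rule card_image_le[OF finS])
  also have "\<dots> \<le> (\<Sum>a\<in>{0..N}. card ({A \<in> Mon a. P dvd A} \<times> Mon (N - a) \<union> Mon a \<times> {C \<in> Mon (N - a). P dvd C}))"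
    by (rule card_UN_le) simp
  also have "\<dots> \<le> (\<Sum>a\<in>{0..N}. card {A \<in> Mon a. P dvd A} * card (Mon (N - a) :: 'a poly set) + card (Mon a :: 'a poly set) * card {C \<in> Mon (N - a). P dvd C})"
    by (rule sum_mono, rule order_trans[OF card_Un_le]) (simp add: card_cartesian_product)
  finally have c0: "real (card {D \<in> FN B N. P dvd D}) \<le> real (\<Sum>a\<in>{0..N}. card {A \<in> Mon a. P dvd A} * card (Mon (N - a) :: 'a poly set) + card (Mon a :: 'a poly set) * card {C \<in> Mon (N - a). P dvd C})"
    by (simp only: of_nat_le_iff)
  also have "\<dots> = (\<Sum>a\<in>{0..N}. real (card {A \<in> Mon a. P dvd A}) * ?q ^ (N - a) + ?q ^ a * real (card {C \<in> Mon (N - a). P dvd C}))"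
    by (simp add: card_Mon)
  finally have c1: "real (card {D \<in> FN B N. P dvd D}) \<le> (\<Sum>a\<in>{0..N}. real (card {A \<in> Mon a. P dvd A}) * ?q ^ (N - a) + ?q ^ a * real (card {C \<in> Mon (N - a). P dvd C}))" .
  have lP: "lead_coeff P = 1" using prime_monic[OF P] .
  have qpos: "?q > 0" by simp
  have "(\<Sum>a\<in>{0..N}. real (card {A \<in> Mon a. P dvd A}) * ?q ^ (N - a) + ?q ^ a * real (card {C \<in> Mon (N - a). P dvd C}))
      \<le> (\<Sum>a\<in>{0..N}. 2 * (?q ^ N / ?q ^ degree P))"
  proof (rule sum_mono)
    fix a assume a: "a \<in> {0..N}"
    have e: "?q ^ a * ?q ^ (N - a) = ?q ^ N" using a by (simp flip: power_add)
    have "real (card {A \<in> Mon a. P dvd A}) * ?q ^ (N - a) \<le> ?q ^ a / ?q ^ degree P * ?q ^ (N - a)"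
      by (rule mult_right_mono[OF card_Mon_dvd_real[OF lP]]) simp
    also have "\<dots> = ?q ^ N / ?q ^ degree P" using e by simp
    finally have 1: "real (card {A \<in> Mon a. P dvd A}) * ?q ^ (N - a) \<le> ?q ^ N / ?q ^ degree P" .
    have "?q ^ a * real (card {C \<in> Mon (N - a). P dvd C}) \<le> ?q ^ a * (?q ^ (N - a) / ?q ^ degree P)"
      by (rule mult_left_mono[OF card_Mon_dvd_real[OF lP]]) simp
    also have "\<dots> = ?q ^ N / ?q ^ degree P" using e by simp
    finally have 2: "?q ^ a * real (card {C \<in> Mon (N - a). P dvd C}) \<le> ?q ^ N / ?q ^ degree P" .
    show "real (card {A \<in> Mon a. P dvd A}) * ?q ^ (N - a) + ?q ^ a * real (card {C \<in> Mon (N - a). P dvd C}) \<le> 2 * (?q ^ N / ?q ^ degree P)"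
      using 1 2 by simp
  qed
  also have "\<dots> = 2 * (real N + 1) * ?q ^ N / ?q ^ degree P" by simp
  finally show ?thesis using c1 by linarith
qed

lemma Dk_degree:
  fixes D :: "'a::{field_gcd,finite} poly"
  assumes D0: "D \<noteq> 0"
  shows "real (degree (Dk D k)) = (\<Sum>P\<in>(Pr k :: 'a poly set). if P dvd D then real k else 0)"
proof -
  have S: "{P \<in> prime_factors D. degree P = k} = {P \<in> Pr k. P dvd D}"
    using D0 by (auto simp: Pr_def in_prime_factors_iff)
  have "degree (Dk D k) = (\<Sum>P\<in>{P \<in> prime_factors D. degree P = k}. degree P)"
    unfolding Dk_def by (rule degree_prod_sum_eq) (auto dest: in_prime_factors_imp_prime)
  also have "\<dots> = (\<Sum>P\<in>{P \<in> Pr k. P dvd D}. k)" unfolding S by (rule sum.cong) (auto simp: Pr_def)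
  finally have "real (degree (Dk D k)) = (\<Sum>P\<in>{P \<in> Pr k. P dvd D}. real k)" by simp
  also have "\<dots> = (\<Sum>P\<in>(Pr k :: 'a poly set). if P dvd D then real k else 0)"
    by (rule sum.inter_filter) simp
  finally show ?thesis .
qed

lemma Dk_le_N:
  fixes D B :: "'a::{field_gcd,finite} poly"
  assumes D: "D \<in> FN B N"
  shows "degree (Dk D k) \<le> N"
proof -
  have "degree (Dk D k) = (\<Sum>P\<in>{P \<in> prime_factors D. degree P = k}. degree P)"
    unfolding Dk_def by (rule degree_prod_sum_eq) (auto dest: in_prime_factors_imp_prime)
  also have "\<dots> \<le> (\<Sum>P\<in>prime_factors D. degree P)"
    by (rule sum_mono2) auto
  also have "\<dots> = degree (rad_poly D)"
    unfolding rad_poly_def by (rule degree_prod_sum_eq[symmetric]) (auto dest: in_prime_factors_imp_prime)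
  also have "\<dots> = N" using D by (simp add: FN_def)
  finally show ?thesis .
qed

lemma num_bound:
  fixes B :: "'a::{field_gcd,finite} poly"
  assumes k: "k \<ge> 1"
  shows "(\<Sum>D\<in>FN B N. real (degree (Dk D k))) \<le> 2 * (real N + 1) * real CARD('a) ^ N"
proof -
  let ?q = "real CARD('a)"
  have "(\<Sum>D\<in>FN B N. real (degree (Dk D k))) = (\<Sum>D\<in>FN B N. \<Sum>P\<in>(Pr k :: 'a poly set). if P dvd D then real k else 0)"
    by (rule sum.cong[OF refl], rule Dk_degree) (auto simp: FN_def)
  also have "\<dots> = (\<Sum>P\<in>(Pr k :: 'a poly set). \<Sum>D\<in>FN B N. if P dvd D then real k else 0)"
    by (rule sum.swap)
  also have "\<dots> = (\<Sum>P\<in>(Pr k :: 'a poly set). real k * real (card {D \<in> FN B N. P dvd D}))"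
  proof (rule sum.cong[OF refl])
    fix P :: "'a poly" assume "P \<in> Pr k"
    have "(\<Sum>D\<in>FN B N. if P dvd D then real k else 0) = (\<Sum>D\<in>{D \<in> FN B N. P dvd D}. real k)"
      by (rule sum.inter_filter[symmetric]) (rule FN_finite)
    also have "\<dots> = real k * real (card {D \<in> FN B N. P dvd D})" by simp
    finally show "(\<Sum>D\<in>FN B N. if P dvd D then real k else 0) = real k * real (card {D \<in> FN B N. P dvd D})" .
  qed
  also have "\<dots> \<le> (\<Sum>P\<in>(Pr k :: 'a poly set). real k * (2 * (real N + 1) * ?q ^ N / ?q ^ k))"
  proof (rule sum_mono)
    fix P :: "'a poly" assume P: "P \<in> Pr k"
    then have "prime P" "degree P = k" by (auto simp: Pr_def)
    then show "real k * real (card {D \<in> FN B N. P dvd D}) \<le> real k * (2 * (real N + 1) * ?q ^ N / ?q ^ k)"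
      using card_FN_dvd[of P B N] by (intro mult_left_mono) auto
  qed
  also have "\<dots> = real (k * card (Pr k :: 'a poly set)) * (2 * (real N + 1) * ?q ^ N / ?q ^ k)"
    by simp
  also have "\<dots> \<le> ?q ^ k * (2 * (real N + 1) * ?q ^ N / ?q ^ k)"
  proof (rule mult_right_mono)
    show "real (k * card (Pr k :: 'a poly set)) \<le> ?q ^ k"
      using prime_count[of k, where 'a='a] by (metis of_nat_le_iff of_nat_power)
  qed simp
  also have "\<dots> = 2 * (real N + 1) * ?q ^ N" by simp
  finally show ?thesis .
qed



lemma pow_sub_le:
  fixes q :: real assumes "q \<ge> 1"
  shows "q ^ (m - j) \<le> q ^ m / q ^ j + 1"
proof (cases "j \<le> m")
  case True
  then have "q ^ m = q ^ (m - j) * q ^ j" by (simp flip: power_add)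
  then have "q ^ (m - j) = q ^ m / q ^ j" using assms by simp
  then show ?thesis by simp
next
  case False
  then have "q ^ (m - j) = 1" by simp
  moreover have "q ^ m / q ^ j \<ge> 0" using assms by simp
  ultimately show ?thesis by simp
qed

lemma geom1:
  fixes q :: real assumes q: "q \<ge> 2"
  shows "(\<Sum>d\<in>{1..h}. 1 / q ^ d) = (1 - 1 / q ^ h) / (q - 1)"
proof (induction h)
  case 0 then show ?case by simp
next
  case (Suc h)
  have "(\<Sum>d\<in>{1..Suc h}. 1 / q ^ d) = (\<Sum>d\<in>{1..h}. 1 / q ^ d) + 1 / q ^ Suc h"
    by simp
  also have "\<dots> = (1 - 1 / q ^ h) / (q - 1) + 1 / q ^ Suc h" using Suc by simp
  also have "\<dots> = (1 - 1 / q ^ Suc h) / (q - 1)"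
    using q by (simp add: field_simps)
  finally show ?case .
qed

lemma geom1_le:
  fixes q :: real assumes q: "q \<ge> 2"
  shows "(\<Sum>d\<in>{1..h}. 1 / q ^ d) \<le> 1 / (q - 1)"
proof -
  have "(1 - 1 / q ^ h) / (q - 1) \<le> 1 / (q - 1)"
    using q by (intro divide_right_mono) auto
  then show ?thesis using geom1[OF q] by simp
qed

lemma geom2_le:
  fixes q :: real assumes q: "q \<ge> 2"
  shows "(\<Sum>d\<in>{1..h}. q ^ d) \<le> q ^ (h + 1)"
proof (induction h)
  case 0 then show ?case using q by simp
next
  case (Suc h)
  have "(\<Sum>d\<in>{1..Suc h}. q ^ d) = (\<Sum>d\<in>{1..h}. q ^ d) + q ^ Suc h" by simp
  also have "\<dots> \<le> q ^ (h + 1) + q ^ Suc h" using Suc by simp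
  also have "\<dots> = 2 * q ^ (h + 1)" by simp
  also have "\<dots> \<le> q * q ^ (h + 1)" using q by (intro mult_right_mono) auto
  finally show ?case by simp
qed

lemma sum_Pl_bound1:
  fixes X :: real
  assumes X: "X \<ge> 0" and q: "real CARD('a) \<ge> 2"
  shows "(\<Sum>P\<in>(Pl h :: 'a::{field_gcd,finite} poly set). X / real CARD('a) ^ (2 * degree P) + 1)
         \<le> X / (real CARD('a) - 1) + real CARD('a) ^ (h + 1)"
proof -
  let ?q = "real CARD('a)"
  have "(\<Sum>P\<in>(Pl h :: 'a poly set). X / ?q ^ (2 * degree P) + 1)
      = (\<Sum>d\<in>{1..h}. real (card (Pr d :: 'a poly set)) * (X / ?q ^ (2 * d) + 1))"
    by (rule sum_Pl)
  also have "\<dots> \<le> (\<Sum>d\<in>{1..h}. ?q ^ d * (X / ?q ^ (2 * d) + 1))"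
  proof (rule sum_mono, rule mult_right_mono)
    fix d show "real (card (Pr d :: 'a poly set)) \<le> ?q ^ d"
      using Pr_card[of d, where 'a='a] by (metis of_nat_le_iff of_nat_power)
    show "0 \<le> X / ?q ^ (2 * d) + 1" using X by simp
  qed
  also have "\<dots> = (\<Sum>d\<in>{1..h}. X * (1 / ?q ^ d) + ?q ^ d)"
  proof (rule sum.cong[OF refl])
    fix d
    have "?q ^ (2 * d) = ?q ^ d * ?q ^ d" by (simp add: power_mult power2_eq_square flip: power_mult_distrib)
    then show "?q ^ d * (X / ?q ^ (2 * d) + 1) = X * (1 / ?q ^ d) + ?q ^ d"
      using q by (simp add: field_simps)
  qed
  also have "\<dots> = X * (\<Sum>d\<in>{1..h}. 1 / ?q ^ d) + (\<Sum>d\<in>{1..h}. ?q ^ d)"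
    by (simp add: sum.distrib sum_distrib_left)
  also have "\<dots> \<le> X * (1 / (?q - 1)) + ?q ^ (h + 1)"
    using geom1_le[OF q, of h] geom2_le[OF q, of h] X by (intro add_mono mult_left_mono) auto
  finally show ?thesis by simp
qed

lemma sum_Pl_bound2:
  fixes X Y :: real
  assumes X: "X \<ge> 0" and Y: "Y \<ge> 0" and q: "real CARD('a) \<ge> 2"
  shows "(\<Sum>P\<in>(Pl h :: 'a::{field_gcd,finite} poly set). (X / real CARD('a) ^ degree P + 1) * (Y / real CARD('a) ^ degree P + 1))
         \<le> X * Y / (real CARD('a) - 1) + real h * X + real h * Y + real CARD('a) ^ (h + 1)"
proof -
  let ?q = "real CARD('a)"
  have "(\<Sum>P\<in>(Pl h :: 'a poly set). (X / ?q ^ degree P + 1) * (Y / ?q ^ degree P + 1))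
      = (\<Sum>d\<in>{1..h}. real (card (Pr d :: 'a poly set)) * ((X / ?q ^ d + 1) * (Y / ?q ^ d + 1)))"
    by (rule sum_Pl)
  also have "\<dots> \<le> (\<Sum>d\<in>{1..h}. ?q ^ d * ((X / ?q ^ d + 1) * (Y / ?q ^ d + 1)))"
  proof (rule sum_mono, rule mult_right_mono)
    fix d show "real (card (Pr d :: 'a poly set)) \<le> ?q ^ d"
      using Pr_card[of d, where 'a='a] by (metis of_nat_le_iff of_nat_power)
    show "0 \<le> (X / ?q ^ d + 1) * (Y / ?q ^ d + 1)" using X Y by simp
  qed
  also have "\<dots> = (\<Sum>d\<in>{1..h}. X * Y * (1 / ?q ^ d) + X + Y + ?q ^ d)"
  proof (rule sum.cong[OF refl])
    fix d
    show "?q ^ d * ((X / ?q ^ d + 1) * (Y / ?q ^ d + 1)) = X * Y * (1 / ?q ^ d) + X + Y + ?q ^ d"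
      using q by (simp add: field_simps)
  qed
  also have "\<dots> = X * Y * (\<Sum>d\<in>{1..h}. 1 / ?q ^ d) + real h * X + real h * Y + (\<Sum>d\<in>{1..h}. ?q ^ d)"
    by (simp add: sum.distrib sum_distrib_left)
  also have "\<dots> \<le> X * Y * (1 / (?q - 1)) + real h * X + real h * Y + ?q ^ (h + 1)"
    using geom1_le[OF q, of h] geom2_le[OF q, of h] X Y by (intro add_mono mult_left_mono) auto
  finally show ?thesis by simp
qed

lemma Mon_nz: "x \<in> Mon m \<Longrightarrow> x \<noteq> 0"
  unfolding Mon_def by auto

lemma A_mon:
  fixes B0 Q :: "'a::{field_gcd,finite} poly"
  assumes B0: "lead_coeff B0 = 1" and Q: "Q \<in> Mon a" and a: "a \<ge> 1"
  shows "Q * B0 + 1 \<in> Mon (a + degree B0)"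
proof -
  have Q0: "Q \<noteq> 0" and B00: "B0 \<noteq> 0" using Q B0 by (auto simp: Mon_def)
  have d: "degree (Q * B0) = a + degree B0" using Q Q0 B00 by (simp add: degree_mult_eq Mon_def)
  have lQ: "lead_coeff Q = 1" using Q unfolding Mon_def by blast
  have "lead_coeff (Q * B0) = lead_coeff Q * lead_coeff B0" by (rule lead_coeff_mult)
  then have l: "lead_coeff (Q * B0) = 1" using lQ B0 by simp
  have "degree (1::'a poly) < degree (Q * B0)" using d a by simp
  then have d1: "degree (Q * B0 + 1) = a + degree B0" using d by (simp add: degree_add_eq_left)
  have "coeff (Q * B0 + 1) (a + degree B0) = coeff (Q * B0) (a + degree B0)"
    using a by simp
  then have "lead_coeff (Q * B0 + 1) = 1" using d1 d l by simp
  then show ?thesis using d1 by (simp add: Mon_def)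
qed

lemma NS_bound:
  fixes B0 :: "'a::{field_gcd,finite} poly"
  assumes B0: "lead_coeff B0 = 1" and a: "a \<ge> 1" and q: "real CARD('a) \<ge> 2"
  shows "real (card {Q \<in> Mon a. \<not> squarefree (Q * B0 + 1)})
    \<le> real CARD('a) ^ a / (real CARD('a) - 1) + real CARD('a) ^ ((a + degree B0) div 2 + 1)"
proof -
  let ?q = "real CARD('a)"
  let ?h = "(a + degree B0) div 2"
  have sub: "{Q \<in> Mon a. \<not> squarefree (Q * B0 + 1)} \<subseteq> (\<Union>P\<in>(Pl ?h :: 'a poly set). {Q \<in> Mon a. P * P dvd Q * B0 + 1})"
  proof
    fix Q assume Qs: "Q \<in> {Q \<in> Mon a. \<not> squarefree (Q * B0 + 1)}"
    then have QA: "Q * B0 + 1 \<in> Mon (a + degree B0)" using A_mon[OF B0 _ a] by auto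
    then have A0: "Q * B0 + 1 \<noteq> 0" by (rule Mon_nz)
    obtain P where P: "prime P" "P\<^sup>2 dvd Q * B0 + 1"
      using Qs A0 squarefree_factorial_semiring[OF A0] by auto
    have P0: "P \<noteq> 0" using P by auto
    have "degree (P\<^sup>2) \<le> degree (Q * B0 + 1)" using P(2) A0 by (rule dvd_imp_degree_le)
    then have "2 * degree P \<le> a + degree B0" using QA P0 by (simp add: degree_power_eq Mon_def)
    then have "degree P \<le> ?h" by linarith
    then have "P \<in> Pl ?h" using P by (simp add: Pl_def)
    moreover have "P * P dvd Q * B0 + 1" using P(2) by (simp add: power2_eq_square)
    ultimately show "Q \<in> (\<Union>P\<in>(Pl ?h :: 'a poly set). {Q \<in> Mon a. P * P dvd Q * B0 + 1})" using Qs by blast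
  qed
  have "card {Q \<in> Mon a. \<not> squarefree (Q * B0 + 1)} \<le> card (\<Union>P\<in>(Pl ?h :: 'a poly set). {Q \<in> Mon a. P * P dvd Q * B0 + 1})"
    by (rule card_mono[OF _ sub]) auto
  also have "\<dots> \<le> (\<Sum>P\<in>(Pl ?h :: 'a poly set). card {Q \<in> Mon a. P * P dvd Q * B0 + 1})"
    by (rule card_UN_le) simp
  finally have c0: "real (card {Q \<in> Mon a. \<not> squarefree (Q * B0 + 1)}) \<le> real (\<Sum>P\<in>(Pl ?h :: 'a poly set). card {Q \<in> Mon a. P * P dvd Q * B0 + 1})"
    by (simp only: of_nat_le_iff)
  also have "\<dots> = (\<Sum>P\<in>(Pl ?h :: 'a poly set). real (card {Q \<in> Mon a. P * P dvd Q * B0 + 1}))" by simp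
  finally have c1: "real (card {Q \<in> Mon a. \<not> squarefree (Q * B0 + 1)}) \<le> (\<Sum>P\<in>(Pl ?h :: 'a poly set). real (card {Q \<in> Mon a. P * P dvd Q * B0 + 1}))" .
  also have "\<dots> \<le> (\<Sum>P\<in>(Pl ?h :: 'a poly set). ?q ^ a / ?q ^ (2 * degree P) + 1)"
  proof (rule sum_mono)
    fix P :: "'a poly" assume "P \<in> Pl ?h"
    then have P0: "P \<noteq> 0" by (auto simp: Pl_def)
    have "card {Q \<in> Mon a. P * P dvd Q * B0 + 1} \<le> CARD('a) ^ (a - degree (P * P))"
      by (rule card_cong_le) (use P0 in simp)
    then have "real (card {Q \<in> Mon a. P * P dvd Q * B0 + 1}) \<le> real (CARD('a) ^ (a - degree (P * P)))"
      by (simp only: of_nat_le_iff)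
    also have "\<dots> = ?q ^ (a - 2 * degree P)" using P0 by (simp add: degree_mult_eq flip: mult_2)
    finally have "real (card {Q \<in> Mon a. P * P dvd Q * B0 + 1}) \<le> ?q ^ (a - 2 * degree P)" .
    also have "\<dots> \<le> ?q ^ a / ?q ^ (2 * degree P) + 1" by (rule pow_sub_le) (use q in simp)
    finally show "real (card {Q \<in> Mon a. P * P dvd Q * B0 + 1}) \<le> ?q ^ a / ?q ^ (2 * degree P) + 1" .
  qed
  also have "\<dots> \<le> ?q ^ a / (?q - 1) + ?q ^ (?h + 1)"
    by (rule sum_Pl_bound1) (use q in auto)
  finally show ?thesis .
qed

lemma NC_bound:
  fixes B0 :: "'a::{field_gcd,finite} poly"
  assumes B0: "lead_coeff B0 = 1" and a: "a \<ge> 1" and c: "c \<ge> 1" and q: "real CARD('a) \<ge> 2"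
  shows "real (card {(Q1, Q2) \<in> Mon a \<times> Mon c. \<not> coprime (Q1 * B0 + 1) (Q2 * B0 + 1)})
    \<le> real CARD('a) ^ a * real CARD('a) ^ c / (real CARD('a) - 1)
      + real (min (a + degree B0) (c + degree B0)) * real CARD('a) ^ a + real (min (a + degree B0) (c + degree B0)) * real CARD('a) ^ c
      + real CARD('a) ^ (min (a + degree B0) (c + degree B0) + 1)"
proof -
  let ?q = "real CARD('a)"
  let ?h = "min (a + degree B0) (c + degree B0)"
  let ?U = "\<Union>P\<in>(Pl ?h :: 'a poly set). {Q \<in> Mon a. P dvd Q * B0 + 1} \<times> {Q \<in> Mon c. P dvd Q * B0 + 1}"
  have sub: "{(Q1, Q2) \<in> Mon a \<times> Mon c. \<not> coprime (Q1 * B0 + 1) (Q2 * B0 + 1)} \<subseteq> ?U"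
  proof
    fix x assume x: "x \<in> {(Q1, Q2) \<in> Mon a \<times> Mon c. \<not> coprime (Q1 * B0 + 1) (Q2 * B0 + 1)}"
    then obtain Q1 Q2 where x12: "x = (Q1, Q2)" "Q1 \<in> Mon a" "Q2 \<in> Mon c"
      "\<not> coprime (Q1 * B0 + 1) (Q2 * B0 + 1)" by auto
    have QA: "Q1 * B0 + 1 \<in> Mon (a + degree B0)" using A_mon[OF B0 x12(2) a] .
    then have A0: "Q1 * B0 + 1 \<noteq> 0" by (rule Mon_nz)
    obtain g where g: "g dvd Q1 * B0 + 1" "g dvd Q2 * B0 + 1" "\<not> is_unit g"
      using x12(4) by (rule not_coprimeE)
    have g0: "g \<noteq> 0" using g(1) A0 by auto
    obtain P where P: "P dvd g" "prime P" using prime_divisor_exists[OF g0 g(3)] by auto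
    have PA: "P dvd Q1 * B0 + 1" and PC: "P dvd Q2 * B0 + 1" using P g dvd_trans by blast+
    have QC: "Q2 * B0 + 1 \<in> Mon (c + degree B0)" using A_mon[OF B0 x12(3) c] .
    then have C0: "Q2 * B0 + 1 \<noteq> 0" by (rule Mon_nz)
    have "degree P \<le> degree (Q1 * B0 + 1)" using PA A0 by (rule dvd_imp_degree_le)
    moreover have "degree P \<le> degree (Q2 * B0 + 1)" using PC C0 by (rule dvd_imp_degree_le)
    ultimately have "P \<in> Pl ?h" using QA QC P by (simp add: Pl_def Mon_def)
    then show "x \<in> ?U" using x12 PA PC by blast
  qed
  have "card {(Q1, Q2) \<in> Mon a \<times> Mon c. \<not> coprime (Q1 * B0 + 1) (Q2 * B0 + 1)} \<le> card ?U"
    by (rule card_mono[OF _ sub]) (intro finite_UN_I finite_cartesian_product; simp)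
  also have "\<dots> \<le> (\<Sum>P\<in>(Pl ?h :: 'a poly set). card ({Q \<in> Mon a. P dvd Q * B0 + 1} \<times> {Q \<in> Mon c. P dvd Q * B0 + 1}))"
    by (rule card_UN_le) simp
  also have "\<dots> = (\<Sum>P\<in>(Pl ?h :: 'a poly set). card {Q \<in> Mon a. P dvd Q * B0 + 1} * card {Q \<in> Mon c. P dvd Q * B0 + 1})"
    by (simp only: card_cartesian_product)
  finally have c0: "real (card {(Q1, Q2) \<in> Mon a \<times> Mon c. \<not> coprime (Q1 * B0 + 1) (Q2 * B0 + 1)})
     \<le> real (\<Sum>P\<in>(Pl ?h :: 'a poly set). card {Q \<in> Mon a. P dvd Q * B0 + 1} * card {Q \<in> Mon c. P dvd Q * B0 + 1})"
    by (simp only: of_nat_le_iff)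
  also have "\<dots> = (\<Sum>P\<in>(Pl ?h :: 'a poly set). real (card {Q \<in> Mon a. P dvd Q * B0 + 1}) * real (card {Q \<in> Mon c. P dvd Q * B0 + 1}))"
    by simp
  finally have c1: "real (card {(Q1, Q2) \<in> Mon a \<times> Mon c. \<not> coprime (Q1 * B0 + 1) (Q2 * B0 + 1)})
     \<le> (\<Sum>P\<in>(Pl ?h :: 'a poly set). real (card {Q \<in> Mon a. P dvd Q * B0 + 1}) * real (card {Q \<in> Mon c. P dvd Q * B0 + 1}))" .
  also have "\<dots> \<le> (\<Sum>P\<in>(Pl ?h :: 'a poly set). (?q ^ a / ?q ^ degree P + 1) * (?q ^ c / ?q ^ degree P + 1))"
  proof (rule sum_mono)
    fix P :: "'a poly" assume "P \<in> Pl ?h"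
    then have P0: "P \<noteq> 0" by (auto simp: Pl_def)
    have b1: "real (card {Q \<in> Mon m. P dvd Q * B0 + 1}) \<le> ?q ^ m / ?q ^ degree P + 1" for m
    proof -
      have "card {Q \<in> Mon m. P dvd Q * B0 + 1} \<le> CARD('a) ^ (m - degree P)"
        by (rule card_cong_le) (use P0 in simp)
      then have "real (card {Q \<in> Mon m. P dvd Q * B0 + 1}) \<le> real (CARD('a) ^ (m - degree P))"
        by (simp only: of_nat_le_iff)
      also have "\<dots> = ?q ^ (m - degree P)" by simp
      also have "\<dots> \<le> ?q ^ m / ?q ^ degree P + 1" by (rule pow_sub_le) (use q in simp)
      finally show ?thesis .
    qed
    show "real (card {Q \<in> Mon a. P dvd Q * B0 + 1}) * real (card {Q \<in> Mon c. P dvd Q * B0 + 1})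
        \<le> (?q ^ a / ?q ^ degree P + 1) * (?q ^ c / ?q ^ degree P + 1)"
      by (rule mult_mono[OF b1 b1]) auto
  qed
  also have "\<dots> \<le> ?q ^ a * ?q ^ c / (?q - 1) + real ?h * ?q ^ a + real ?h * ?q ^ c + ?q ^ (?h + 1)"
    by (rule sum_Pl_bound2) (use q in auto)
  finally show ?thesis .
qed

lemma pow40: "n \<ge> 3 \<Longrightarrow> 40 * n \<le> (7::nat) ^ n"
proof (induction n rule: dec_induct)
  case base then show ?case by simp
next
  case (step n) then show ?case by simp
qed

definition Good :: "'a::{field_gcd,finite} poly \<Rightarrow> nat \<Rightarrow> nat \<Rightarrow> ('a poly \<times> 'a poly) set" where
  "Good B0 a c = {(Q1, Q2) \<in> Mon a \<times> Mon c. squarefree (Q1 * B0 + 1) \<and> squarefree (Q2 * B0 + 1) \<and> coprime (Q1 * B0 + 1) (Q2 * B0 + 1)}"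

lemma good_bound:
  fixes B0 :: "'a::{field_gcd,finite} poly"
  assumes B0: "lead_coeff B0 = 1" and q7: "CARD('a) \<ge> 7"
    and a: "a \<ge> degree B0 + 6" and c: "c \<ge> degree B0 + 6"
  shows "real (card (Good B0 a c)) \<ge> real CARD('a) ^ a * real CARD('a) ^ c / 4"
proof -
  let ?q = "real CARD('a)"
  let ?b = "degree B0"
  define X where "X = ?q ^ a"
  define Y where "Y = ?q ^ c"
  have q: "?q \<ge> 2" "?q \<ge> 7" using q7 by auto
  have X0: "X \<ge> 1" "Y \<ge> 1" using q by (auto simp: X_def Y_def)
  have a1: "a \<ge> 1" and c1: "c \<ge> 1" using a c by auto
  let ?NSa = "{Q \<in> Mon a. \<not> squarefree (Q * B0 + 1)}"
  let ?NSc = "{Q \<in> Mon c. \<not> squarefree (Q * B0 + 1)}"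
  let ?NC = "{(Q1, Q2) \<in> Mon a \<times> Mon c. \<not> coprime (Q1 * B0 + 1) (Q2 * B0 + 1)}"
  let ?Bad = "?NSa \<times> Mon c \<union> Mon a \<times> ?NSc \<union> ?NC"
  have cover: "Mon a \<times> Mon c \<subseteq> Good B0 a c \<union> ?Bad" by (auto simp: Good_def)
  have finNC: "finite ?NC" by (rule finite_subset[of _ "Mon a \<times> Mon c"]) auto
  have finNSa: "finite ?NSa" by (rule finite_subset[of _ "Mon a"]) auto
  have finNSc: "finite ?NSc" by (rule finite_subset[of _ "Mon c"]) auto
  have finB: "finite ?Bad"
    by (intro finite_UnI finite_cartesian_product finNC finNSa finNSc Mon_finite)
  have finG: "finite (Good B0 a c)" unfolding Good_def
    by (rule finite_subset[of _ "Mon a \<times> Mon c"]) auto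
  have cB1: "card ?Bad \<le> card (?NSa \<times> Mon c \<union> Mon a \<times> ?NSc) + card ?NC" by (rule card_Un_le)
  have cB2: "card (?NSa \<times> Mon c \<union> Mon a \<times> ?NSc) \<le> card (?NSa \<times> (Mon c :: 'a poly set)) + card ((Mon a :: 'a poly set) \<times> ?NSc)" by (rule card_Un_le)
  have "card (Mon a \<times> Mon c :: ('a poly \<times> 'a poly) set) \<le> card (Good B0 a c \<union> ?Bad)"
    by (rule card_mono[OF _ cover]) (use finB finG in auto)
  also have "\<dots> \<le> card (Good B0 a c) + card ?Bad" by (rule card_Un_le)
  also have "card ?Bad \<le> card (?NSa \<times> (Mon c :: 'a poly set)) + card ((Mon a :: 'a poly set) \<times> ?NSc) + card ?NC"
    using cB1 cB2 by linarith
  finally have n1: "card (Mon a \<times> Mon c :: ('a poly \<times> 'a poly) set) \<le> card (Good B0 a c) + (card ?NSa * card (Mon c :: 'a poly set) + card (Mon a :: 'a poly set) * card ?NSc + card ?NC)"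
    by (simp add: card_cartesian_product)
  have r1: "X * Y \<le> real (card (Good B0 a c)) + (real (card ?NSa) * Y + X * real (card ?NSc) + real (card ?NC))"
  proof -
    have "real (card (Mon a \<times> Mon c :: ('a poly \<times> 'a poly) set)) \<le> real (card (Good B0 a c) + (card ?NSa * card (Mon c :: 'a poly set) + card (Mon a :: 'a poly set) * card ?NSc + card ?NC))"
      using n1 by (simp only: of_nat_le_iff)
    then show ?thesis by (simp add: card_cartesian_product card_Mon X_def Y_def)
  qed
  let ?ha = "(a + ?b) div 2" and ?hc = "(c + ?b) div 2" and ?h = "min (a + ?b) (c + ?b)"
  have NSa: "real (card ?NSa) \<le> X / (?q - 1) + ?q ^ (?ha + 1)"
    using NS_bound[OF B0 a1 q(1)] by (simp add: X_def)
  have NSc: "real (card ?NSc) \<le> Y / (?q - 1) + ?q ^ (?hc + 1)"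
    using NS_bound[OF B0 c1 q(1)] by (simp add: Y_def)
  have NC: "real (card ?NC) \<le> X * Y / (?q - 1) + real ?h * X + real ?h * Y + ?q ^ (?h + 1)"
    using NC_bound[OF B0 a1 c1 q(1)] by (simp add: X_def Y_def)
  have e1: "3 * (X * Y / (?q - 1)) \<le> X * Y / 2"
  proof -
    have "3 / (?q - 1) \<le> 1 / 2" using q by (simp add: field_simps)
    then have "X * Y * (3 / (?q - 1)) \<le> X * Y * (1 / 2)" using X0 by (intro mult_left_mono) auto
    then show ?thesis by simp
  qed
  have p20: "20 * ?q ^ k \<le> ?q ^ (k + 2)" for k
  proof -
    have "7 * 7 \<le> ?q * ?q" using q by (intro mult_mono) auto
    then have "20 \<le> ?q ^ 2" by (simp add: power2_eq_square)
    then have "20 * ?q ^ k \<le> ?q ^ 2 * ?q ^ k" using q by (intro mult_right_mono) auto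
    moreover have "?q ^ (k + 2) = ?q ^ 2 * ?q ^ k" by (simp only: power_add mult.commute)
    ultimately show ?thesis by linarith
  qed
  have e2: "20 * ?q ^ (?ha + 1) \<le> X"
  proof -
    have "?ha + 1 + 2 \<le> a" using a by linarith
    then have "?q ^ (?ha + 1 + 2) \<le> X" unfolding X_def using q by (intro power_increasing) auto
    then show ?thesis using p20[of "?ha + 1"] by linarith
  qed
  have e3: "20 * ?q ^ (?hc + 1) \<le> Y"
  proof -
    have "?hc + 1 + 2 \<le> c" using c by linarith
    then have "?q ^ (?hc + 1 + 2) \<le> Y" unfolding Y_def using q by (intro power_increasing) auto
    then show ?thesis using p20[of "?hc + 1"] by linarith
  qed
  have e4: "20 * real ?h \<le> Y"
  proof -
    have "40 * c \<le> 7 ^ c" using pow40[of c] c by simp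
    then have "real (40 * c) \<le> real (7 ^ c)" by (simp only: of_nat_le_iff)
    then have "40 * real c \<le> 7 ^ c" by simp
    also have "(7::real) ^ c \<le> Y" unfolding Y_def using q by (intro power_mono) auto
    finally have "40 * real c \<le> Y" .
    moreover have "real ?h \<le> 2 * real c" using c by simp
    then have "20 * real ?h \<le> 40 * real c" by simp
    ultimately show ?thesis by (rule order_trans[rotated])
  qed
  have e5: "20 * real ?h \<le> X"
  proof -
    have "40 * a \<le> 7 ^ a" using pow40[of a] a by simp
    then have "real (40 * a) \<le> real (7 ^ a)" by (simp only: of_nat_le_iff)
    then have "40 * real a \<le> 7 ^ a" by simp
    also have "(7::real) ^ a \<le> X" unfolding X_def using q by (intro power_mono) auto
    finally have "40 * real a \<le> X" .
    moreover have "real ?h \<le> 2 * real a" using a by simp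
    then have "20 * real ?h \<le> 40 * real a" by simp
    ultimately show ?thesis by (rule order_trans[rotated])
  qed
  have e6: "20 * ?q ^ (?h + 1) \<le> X * Y"
  proof -
    have "?h + 1 + 2 \<le> a + c" using c by linarith
    then have "?q ^ (?h + 1 + 2) \<le> ?q ^ (a + c)" using q by (intro power_increasing) auto
    also have "?q ^ (a + c) = X * Y" by (simp add: X_def Y_def power_add)
    finally show ?thesis using p20[of "?h + 1"] by linarith
  qed
  have t1: "?q ^ (?ha + 1) * Y \<le> X * Y / 20" using e2 X0 by (simp add: field_simps)
  have t2: "X * ?q ^ (?hc + 1) \<le> X * Y / 20" using e3 X0 by (simp add: field_simps)
  have t3: "real ?h * X \<le> X * Y / 20" using e4 X0 by (simp add: field_simps)
  have t4: "real ?h * Y \<le> X * Y / 20" using e5 X0 by (simp add: field_simps)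
  have t5: "?q ^ (?h + 1) \<le> X * Y / 20" using e6 by simp
  have "real (card ?NSa) * Y \<le> (X / (?q - 1) + ?q ^ (?ha + 1)) * Y"
    using NSa X0 by (intro mult_right_mono) auto
  moreover have "X * real (card ?NSc) \<le> X * (Y / (?q - 1) + ?q ^ (?hc + 1))"
    using NSc X0 by (intro mult_left_mono) auto
  ultimately have "real (card ?NSa) * Y + X * real (card ?NSc) + real (card ?NC)
     \<le> 3 * (X * Y / (?q - 1)) + ?q ^ (?ha + 1) * Y + X * ?q ^ (?hc + 1) + real ?h * X + real ?h * Y + ?q ^ (?h + 1)"
  proof -
    have m1: "(X / (?q - 1) + ?q ^ (?ha + 1)) * Y = X * Y / (?q - 1) + ?q ^ (?ha + 1) * Y"
      by (simp add: distrib_right)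
    have m2: "X * (Y / (?q - 1) + ?q ^ (?hc + 1)) = X * Y / (?q - 1) + X * ?q ^ (?hc + 1)"
      by (simp add: distrib_left)
    assume "real (card ?NSa) * Y \<le> (X / (?q - 1) + ?q ^ (?ha + 1)) * Y"
      "X * real (card ?NSc) \<le> X * (Y / (?q - 1) + ?q ^ (?hc + 1))"
    then show ?thesis using NC m1 m2 by linarith
  qed
  also have "\<dots> \<le> X * Y / 2 + 5 * (X * Y / 20)"
    using e1 t1 t2 t3 t4 t5 by linarith
  finally have "real (card ?NSa) * Y + X * real (card ?NSc) + real (card ?NC) \<le> 3 / 4 * (X * Y)" by simp
  with r1 have "X * Y / 4 \<le> real (card (Good B0 a c))" by linarith
  then show ?thesis by (simp add: X_def Y_def)
qed



lemma sqf_le1: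
  fixes A :: "'a::{field_gcd,finite} poly"
  assumes "A \<noteq> 0" "squarefree A" "prime P"
  shows "multiplicity P A \<le> 1"
  using assms squarefree_factorial_semiring''[of A] by auto

lemma AC_mult:
  fixes A C P :: "'a::{field_gcd,finite} poly"
  assumes A0: "A \<noteq> 0" and C0: "C \<noteq> 0" and sA: "squarefree A" and sC: "squarefree C"
    and cop: "coprime A C" and P: "prime P"
  shows "multiplicity P (A * C * C) = multiplicity P A + 2 * multiplicity P C"
    "multiplicity P A \<le> 1" "multiplicity P C \<le> 1"
    "multiplicity P A = 0 \<or> multiplicity P C = 0"
proof -
  have pe: "prime_elem P" using P by simp
  show "multiplicity P (A * C * C) = multiplicity P A + 2 * multiplicity P C"
    using A0 C0 pe by (simp add: prime_elem_multiplicity_mult_distrib)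
  show "multiplicity P A \<le> 1" using sqf_le1[OF A0 sA P] .
  show "multiplicity P C \<le> 1" using sqf_le1[OF C0 sC P] .
  show "multiplicity P A = 0 \<or> multiplicity P C = 0"
  proof (rule ccontr)
    assume "\<not> (multiplicity P A = 0 \<or> multiplicity P C = 0)"
    then have "1 \<le> multiplicity P A" "1 \<le> multiplicity P C" by auto
    then have "P ^ 1 dvd A" "P ^ 1 dvd C" using multiplicity_dvd'[of 1 P A] multiplicity_dvd'[of 1 P C] by auto
    then have "\<not> coprime A C" using P by (intro not_coprimeI[of P]) auto
    with cop show False by simp
  qed
qed

lemma AC_inj:
  fixes A C A' C' :: "'a::{field_gcd,finite} poly"
  assumes lA: "lead_coeff A = 1" and lC: "lead_coeff C = 1" and sA: "squarefree A" and sC: "squarefree C"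
    and cop: "coprime A C"
    and lA': "lead_coeff A' = 1" and lC': "lead_coeff C' = 1" and sA': "squarefree A'" and sC': "squarefree C'"
    and cop': "coprime A' C'"
    and eq: "A * C * C = A' * C' * C'"
  shows "C = C' \<and> A = A'"
proof -
  have A0: "A \<noteq> 0" and C0: "C \<noteq> 0" and A0': "A' \<noteq> 0" and C0': "C' \<noteq> 0"
    using lA lC lA' lC' by auto
  have "multiplicity P C = multiplicity P C'" if P: "prime P" for P
  proof -
    note m = AC_mult[OF A0 C0 sA sC cop P]
    note m' = AC_mult[OF A0' C0' sA' sC' cop' P]
    have "multiplicity P C = multiplicity P (A * C * C) div 2" using m by auto
    also have "\<dots> = multiplicity P (A' * C' * C') div 2" using eq by simp
    also have "\<dots> = multiplicity P C'" using m' by auto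
    finally show ?thesis .
  qed
  then have "normalize C = normalize C'" by (intro multiplicity_eq_imp_eq C0 C0') auto
  then have CC: "C = C'" using mon_norm[OF lC] mon_norm[OF lC'] by simp
  then have "A * (C * C) = A' * (C * C)" using eq by (simp add: mult.assoc)
  then have "A = A'" using C0 by simp
  with CC show ?thesis by simp
qed

lemma sqf_deg:
  fixes A :: "'a::{field_gcd,finite} poly"
  assumes lA: "lead_coeff A = 1" and sA: "squarefree A"
  shows "degree A = (\<Sum>P\<in>prime_factors A. degree P)"
proof -
  have A0: "A \<noteq> 0" using lA by auto
  have "degree A = (\<Sum>P\<in>prime_factors A. multiplicity P A * degree P)" by (rule deg_formula[OF lA])
  also have "\<dots> = (\<Sum>P\<in>prime_factors A. degree P)"
    using squarefree_factorial_semiring'[OF A0] sA by (intro sum.cong) auto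
  finally show ?thesis .
qed

lemma AC_in_FN:
  fixes A C B :: "'a::{field_gcd,finite} poly"
  assumes lA: "lead_coeff A = 1" and lC: "lead_coeff C = 1" and sA: "squarefree A" and sC: "squarefree C"
    and cop: "coprime A C" and cAB: "coprime A B" and cCB: "coprime C B"
    and m3: "(degree A + 2 * degree C) mod 3 = 0"
  shows "A * C * C \<in> FN B (degree A + degree C)"
proof -
  have A0: "A \<noteq> 0" and C0: "C \<noteq> 0" using lA lC by auto
  let ?D = "A * C * C"
  have D0: "?D \<noteq> 0" using A0 C0 by simp
  have lD: "lead_coeff ?D = 1" using lA lC by (simp add: lead_coeff_mult)
  have cf: "cube_free ?D" unfolding cube_free_def
  proof (intro allI impI)
    fix P :: "'a poly" assume P: "prime P"
    note m = AC_mult[OF A0 C0 sA sC cop P]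
    have "multiplicity P ?D < 3" using m by linarith
    then show "\<not> P ^ 3 dvd ?D" using power_dvd_iff_le_multiplicity[OF D0, of P 3] P by auto
  qed
  have cDB: "coprime ?D B" using cAB cCB by simp
  have pf: "prime_factors ?D = prime_factors A \<union> prime_factors C"
    using A0 C0 by (simp add: prime_factors_product)
  have disj: "prime_factors A \<inter> prime_factors C = {}"
  proof (rule ccontr)
    assume "prime_factors A \<inter> prime_factors C \<noteq> {}"
    then obtain P where "P \<in> prime_factors A" "P \<in> prime_factors C" by blast
    then have "P dvd A" "P dvd C" "prime P" by (auto dest: in_prime_factors_imp_prime)
    then have "\<not> coprime A C" by (intro not_coprimeI[of P]) auto
    with cop show False by simp
  qed
  have "degree (rad_poly ?D) = (\<Sum>P\<in>prime_factors ?D. degree P)"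
    unfolding rad_poly_def by (rule degree_prod_sum_eq) (auto dest: in_prime_factors_imp_prime)
  also have "\<dots> = (\<Sum>P\<in>prime_factors A. degree P) + (\<Sum>P\<in>prime_factors C. degree P)"
    unfolding pf by (rule sum.union_disjoint) (use disj in auto)
  also have "\<dots> = degree A + degree C" using sqf_deg[OF lA sA] sqf_deg[OF lC sC] by simp
  finally have dr: "degree (rad_poly ?D) = degree A + degree C" .
  have "degree ?D = degree A + 2 * degree C" using A0 C0 by (simp add: degree_mult_eq)
  then have "degree ?D mod 3 = 0" using m3 by simp
  then show ?thesis using lD cf cDB dr by (simp add: FN_def)
qed




lemma B0_props:
  fixes B :: "'a::{field_gcd,finite} poly"
  assumes B: "B \<noteq> 0"
  defines "BB \<equiv> smult (inverse (lead_coeff B)) B"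
  shows "lead_coeff BB = 1" "degree BB = degree B" "coprime (Q * BB + 1) B"
proof -
  have lc0: "lead_coeff B \<noteq> 0" using B by simp
  show "lead_coeff BB = 1" using lc0 by (simp add: BB_def)
  show "degree BB = degree B" using lc0 by (simp add: BB_def)
  have BdB: "B dvd BB" unfolding BB_def by (rule dvd_smult) simp
  show "coprime (Q * BB + 1) B"
  proof (rule coprimeI)
    fix c assume c1: "c dvd Q * BB + 1" and c2: "c dvd B"
    have "c dvd Q * BB" using c2 BdB by (meson dvd_mult dvd_trans)
    then show "is_unit c" using c1 by (metis dvd_add_right_iff)
  qed
qed

lemma FN_lower:
  fixes B :: "'a::{field_gcd,finite} poly"
  assumes B: "B \<noteq> 0" and q7: "CARD('a) \<ge> 7" and N: "N \<ge> 16 * degree B + 57"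
  shows "real (card (FN B N)) \<ge> (real N + 1) * real CARD('a) ^ N / (48 * real CARD('a) ^ (2 * degree B))"
proof -
  let ?q = "real CARD('a)"
  define b where "b = degree B"
  define K where "K = b + 6"
  define M where "M = N - 2 * b - 2 * K"
  define L where "L = M div 3"
  define r where "r = (2 * ((N + K + b) mod 3)) mod 3"
  define cc where "cc t = K + r + 3 * t" for t
  define aa where "aa t = N - 2 * b - cc t" for t
  define BB where "BB = smult (inverse (lead_coeff B)) B"
  have lBB: "lead_coeff BB = 1" and dBB: "degree BB = b" and copB: "\<And>Q. coprime (Q * BB + 1) B"
    using B0_props[OF B] by (auto simp: BB_def b_def)
  have BB0: "BB \<noteq> 0" using lBB by auto
  have r2: "r \<le> 2" unfolding r_def by linarith
  have rmod: "(N + K + b + r) mod 3 = 0"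
  proof -
    have "(N + K + b + r) mod 3 = ((N + K + b) + 2 * (N + K + b)) mod 3"
      unfolding r_def by (metis mod_add_right_eq mod_mult_right_eq)
    also have "\<dots> = 0" by simp
    finally show ?thesis .
  qed
  have ar: "cc t \<ge> b + 6 \<and> aa t \<ge> b + 6 \<and> aa t + cc t = N - 2 * b \<and> (aa t + b + 2 * (cc t + b)) mod 3 = 0"
    if t: "t < L" for t
  proof -
    have "3 * t + 3 \<le> M" using t by (simp add: L_def)
    then have h: "cc t + K + 1 \<le> N - 2 * b" using r2 N by (simp add: cc_def M_def K_def)
    then have e: "aa t + cc t = N - 2 * b" by (simp add: aa_def)
    have "aa t + b + 2 * (cc t + b) = (N + K + b + r) + 3 * t"
      using h by (simp add: aa_def cc_def K_def) 
    then have "(aa t + b + 2 * (cc t + b)) mod 3 = ((N + K + b + r) + 3 * t) mod 3" by (simp only:)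
    also have "\<dots> = (N + K + b + r) mod 3" by simp
    finally have m: "(aa t + b + 2 * (cc t + b)) mod 3 = 0" using rmod by simp
    have c1: "cc t \<ge> b + 6" by (simp add: cc_def K_def)
    have a1: "aa t \<ge> b + 6" using h unfolding aa_def K_def by linarith
    show ?thesis using c1 a1 e m by blast
  qed
  define Phi where "Phi = (\<lambda>(t::nat, (Q1::'a poly, Q2::'a poly)). (Q1 * BB + 1) * (Q2 * BB + 1) * (Q2 * BB + 1))"
  define S where "S = Sigma {..<L} (\<lambda>t. Good BB (aa t) (cc t))"
  have goodsub: "Good BB a c \<subseteq> Mon a \<times> Mon c" for a c by (auto simp: Good_def)
  have finGood: "finite (Good BB a c)" for a c by (rule finite_subset[OF goodsub]) simp
  have img: "Phi ` S \<subseteq> FN B N"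
  proof
    fix D assume "D \<in> Phi ` S"
    then obtain t Q1 Q2 where t: "t < L" and g: "(Q1, Q2) \<in> Good BB (aa t) (cc t)"
      and D: "D = (Q1 * BB + 1) * (Q2 * BB + 1) * (Q2 * BB + 1)"
      by (auto simp: S_def Phi_def)
    note art = ar[OF t]
    have g': "Q1 \<in> Mon (aa t)" "Q2 \<in> Mon (cc t)" "squarefree (Q1 * BB + 1)" "squarefree (Q2 * BB + 1)"
      "coprime (Q1 * BB + 1) (Q2 * BB + 1)" using g by (auto simp: Good_def)
    have A: "Q1 * BB + 1 \<in> Mon (aa t + b)" using A_mon[OF lBB g'(1)] art dBB by auto
    have C: "Q2 * BB + 1 \<in> Mon (cc t + b)" using A_mon[OF lBB g'(2)] art dBB by auto
    have "D \<in> FN B (degree (Q1 * BB + 1) + degree (Q2 * BB + 1))"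
      unfolding D
      by (rule AC_in_FN) (use A C g' copB art in \<open>auto simp: Mon_def\<close>)
    moreover have "degree (Q1 * BB + 1) + degree (Q2 * BB + 1) = N"
    proof -
      have "degree (Q1 * BB + 1) = aa t + b" using A unfolding Mon_def by blast
      moreover have "degree (Q2 * BB + 1) = cc t + b" using C unfolding Mon_def by blast
      moreover have "aa t + cc t = N - 2 * b" using art by blast
      ultimately show ?thesis using N unfolding b_def by linarith
    qed
    ultimately show "D \<in> FN B N" by simp
  qed
  have inj: "inj_on Phi S"
  proof (rule inj_onI)
    fix x y assume x: "x \<in> S" and y: "y \<in> S" and eq: "Phi x = Phi y"
    obtain t Q1 Q2 where xx: "x = (t, Q1, Q2)" by (cases x) auto
    obtain t' Q1' Q2' where yy: "y = (t', Q1', Q2')" by (cases y) auto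
    have t: "t < L" and g: "(Q1, Q2) \<in> Good BB (aa t) (cc t)" using x xx by (auto simp: S_def)
    have t': "t' < L" and g2: "(Q1', Q2') \<in> Good BB (aa t') (cc t')" using y yy by (auto simp: S_def)
    note art = ar[OF t] and art' = ar[OF t']
    have g': "Q1 \<in> Mon (aa t)" "Q2 \<in> Mon (cc t)" "squarefree (Q1 * BB + 1)" "squarefree (Q2 * BB + 1)"
      "coprime (Q1 * BB + 1) (Q2 * BB + 1)" using g by (auto simp: Good_def)
    have g2': "Q1' \<in> Mon (aa t')" "Q2' \<in> Mon (cc t')" "squarefree (Q1' * BB + 1)" "squarefree (Q2' * BB + 1)"
      "coprime (Q1' * BB + 1) (Q2' * BB + 1)" using g2 by (auto simp: Good_def)
    have A: "Q1 * BB + 1 \<in> Mon (aa t + b)" using A_mon[OF lBB g'(1)] art dBB by auto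
    have C: "Q2 * BB + 1 \<in> Mon (cc t + b)" using A_mon[OF lBB g'(2)] art dBB by auto
    have A': "Q1' * BB + 1 \<in> Mon (aa t' + b)" using A_mon[OF lBB g2'(1)] art' dBB by auto
    have C': "Q2' * BB + 1 \<in> Mon (cc t' + b)" using A_mon[OF lBB g2'(2)] art' dBB by auto
    have e: "(Q1 * BB + 1) * (Q2 * BB + 1) * (Q2 * BB + 1) = (Q1' * BB + 1) * (Q2' * BB + 1) * (Q2' * BB + 1)"
      using eq xx yy by (simp add: Phi_def)
    have CA: "Q2 * BB + 1 = Q2' * BB + 1 \<and> Q1 * BB + 1 = Q1' * BB + 1"
      by (rule AC_inj[OF _ _ _ _ _ _ _ _ _ _ e]) (use A C A' C' g' g2' in \<open>auto simp: Mon_def\<close>)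
    then have "Q2 = Q2'" "Q1 = Q1'" using BB0 by auto
    moreover have "cc t = cc t'" using CA C C' by (auto simp: Mon_def)
    then have "t = t'" by (simp add: cc_def)
    ultimately show "x = y" using xx yy by simp
  qed
  have finFN: "finite (FN B N)" by (rule FN_finite)
  have "card S \<le> card (FN B N)"
    using card_inj_on_le[OF inj img finFN] .
  moreover have "card S = (\<Sum>t<L. card (Good BB (aa t) (cc t)))"
    unfolding S_def by (rule card_SigmaI) (auto intro: finGood)
  ultimately have c1: "real (card (FN B N)) \<ge> (\<Sum>t<L. real (card (Good BB (aa t) (cc t))))"
    by (metis of_nat_le_iff of_nat_sum)
  have "(\<Sum>t<L. real (card (Good BB (aa t) (cc t)))) \<ge> (\<Sum>t<L. ?q ^ (N - 2 * b) / 4)"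
  proof (rule sum_mono)
    fix t assume "t \<in> {..<L}"
    then have art: "cc t \<ge> b + 6 \<and> aa t \<ge> b + 6 \<and> aa t + cc t = N - 2 * b \<and> (aa t + b + 2 * (cc t + b)) mod 3 = 0"
      using ar by auto
    have "?q ^ aa t * ?q ^ cc t / 4 \<le> real (card (Good BB (aa t) (cc t)))"
      by (rule good_bound[OF lBB q7]) (use art dBB in auto)
    moreover have "?q ^ aa t * ?q ^ cc t = ?q ^ (N - 2 * b)" using art by (simp flip: power_add)
    ultimately show "?q ^ (N - 2 * b) / 4 \<le> real (card (Good BB (aa t) (cc t)))" by simp
  qed
  then have c2: "real (card (FN B N)) \<ge> real L * ?q ^ (N - 2 * b) / 4" using c1 by simp
  have "M = 3 * (M div 3) + M mod 3" by simp
  moreover have "M mod 3 < 3" by simp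
  moreover have "M = N - 4 * b - 12" by (simp add: M_def K_def)
  ultimately have "12 * L \<ge> N + 1" using N by (simp add: L_def b_def)
  then have "real (N + 1) \<le> real (12 * L)" by (simp only: of_nat_le_iff)
  then have Lb: "real L \<ge> (real N + 1) / 12" by simp
  have qN: "?q ^ (N - 2 * b) = ?q ^ N / ?q ^ (2 * b)"
  proof -
    have "?q ^ N = ?q ^ (N - 2 * b) * ?q ^ (2 * b)" using N by (simp add: b_def flip: power_add)
    then show ?thesis by simp
  qed
  have qpos: "?q ^ (N - 2 * b) \<ge> 0" by simp
  have "(real N + 1) / 12 * ?q ^ (N - 2 * b) / 4 \<le> real L * ?q ^ (N - 2 * b) / 4"
    using Lb qpos by (intro divide_right_mono mult_right_mono) auto
  then have "real (card (FN B N)) \<ge> (real N + 1) / 12 * ?q ^ (N - 2 * b) / 4" using c2 by linarith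
  moreover have "(real N + 1) / 12 * ?q ^ (N - 2 * b) / 4 = (real N + 1) * ?q ^ N / (48 * ?q ^ (2 * b))"
  proof -
    have qp: "?q ^ (2 * b) > 0" by simp
    show ?thesis unfolding qN using qp by (simp add: field_simps)
  qed
  ultimately have "real (card (FN B N)) \<ge> (real N + 1) * ?q ^ N / (48 * ?q ^ (2 * b))" by linarith
  then show ?thesis by (simp only: b_def)
qed

lemma avg_bound:
  fixes B :: "'a::{field_gcd,finite} poly"
  assumes B: "B \<noteq> 0" and q7: "CARD('a) \<ge> 7" and k: "k \<ge> 1"
  shows "(1 / real (card (FN B N))) * (\<Sum>D\<in>FN B N. real (degree (Dk D k)))
    \<le> max (real (16 * degree B + 57)) (96 * real CARD('a) ^ (2 * degree B))"
proof (cases "N < 16 * degree B + 57")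
  case True
  have "(\<Sum>D\<in>FN B N. real (degree (Dk D k))) \<le> (\<Sum>D\<in>FN B N. real N)"
    by (rule sum_mono) (use Dk_le_N in auto)
  also have "\<dots> = real (card (FN B N)) * real N" by simp
  finally have s: "(\<Sum>D\<in>FN B N. real (degree (Dk D k))) \<le> real (card (FN B N)) * real N" .
  have "(1 / real (card (FN B N))) * (\<Sum>D\<in>FN B N. real (degree (Dk D k))) \<le> real N"
  proof (cases "card (FN B N) = 0")
    case True then show ?thesis by simp
  next
    case False
    then have "real (card (FN B N)) > 0" by simp
    then show ?thesis using s by (simp add: field_simps)
  qed
  also have "real N \<le> real (16 * degree B + 57)" using True by simp
  finally show ?thesis by simp
next
  case False
  let ?q = "real CARD('a)"
  let ?c = "real (card (FN B N))"
  have lo: "?c \<ge> (real N + 1) * ?q ^ N / (48 * ?q ^ (2 * degree B))"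
    using FN_lower[OF B q7] False by simp
  have pos: "(real N + 1) * ?q ^ N / (48 * ?q ^ (2 * degree B)) > 0" by simp
  then have cpos: "?c > 0" using lo by linarith
  have up: "(\<Sum>D\<in>FN B N. real (degree (Dk D k))) \<le> 2 * (real N + 1) * ?q ^ N"
    by (rule num_bound[OF k])
  have "96 * ?q ^ (2 * degree B) * ((real N + 1) * ?q ^ N / (48 * ?q ^ (2 * degree B))) = 2 * (real N + 1) * ?q ^ N"
    by (simp add: field_simps)
  moreover have "96 * ?q ^ (2 * degree B) * ((real N + 1) * ?q ^ N / (48 * ?q ^ (2 * degree B))) \<le> 96 * ?q ^ (2 * degree B) * ?c"
    using lo by (intro mult_left_mono) auto
  ultimately have "(\<Sum>D\<in>FN B N. real (degree (Dk D k))) \<le> 96 * ?q ^ (2 * degree B) * ?c"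
    using up by linarith
  then have "(1 / ?c) * (\<Sum>D\<in>FN B N. real (degree (Dk D k))) \<le> 96 * ?q ^ (2 * degree B)"
    using cpos by (simp add: field_simps)
  then show ?thesis by linarith
qed

lemma card_ge7:
  assumes "CARD('a::{field_gcd,finite}) mod 6 = 1"
  shows "CARD('a) \<ge> 7"
proof -
  have "{0::'a, 1} \<subseteq> UNIV" by simp
  then have "card {0::'a, 1} \<le> CARD('a)" by (intro card_mono) auto
  then have "CARD('a) \<ge> 2" by simp
  then show ?thesis using assms by presburger
qed

theorem lemma2p7:
  fixes B :: "'a::{field_gcd,finite} poly" and p r :: nat
  assumes "prime p" and "p \<noteq> 2" and "p \<noteq> 3"
    and "CARD('a) = p ^ r" and "CARD('a) mod 6 = 1"
    and "minimal_weierstrass_j0 B"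
  shows "\<exists>C::real. \<forall>N n::nat. n \<ge> 1 \<longrightarrow>
           (1 / real (card (FN B N))) *
             (\<Sum>D\<in>FN B N. real n * (\<Sum>d | d dvd n. real (degree (Dk D (n div d)))))
           \<le> C * real n * real (tau n)"
proof -
  have B: "B \<noteq> 0" using assms(6) by (simp add: minimal_weierstrass_j0_def)
  have q7: "CARD('a) \<ge> 7" using card_ge7 assms(5) by blast
  define C0 where "C0 = max (real (16 * degree B + 57)) (96 * real CARD('a) ^ (2 * degree B))"
  have avg: "\<And>N k. k \<ge> 1 \<Longrightarrow> (1 / real (card (FN B N))) * (\<Sum>D\<in>FN B N. real (degree (Dk D k))) \<le> C0"
    unfolding C0_def by (rule avg_bound[OF B q7])
  show ?thesis
  proof (intro exI allI impI)
    fix N n :: nat assume n: "n \<ge> 1"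
    let ?F = "FN B N"
    let ?Dv = "{d. d dvd n}"
    have finDv: "finite ?Dv" using n by (simp add: finite_divisors_nat)
    have "(\<Sum>D\<in>?F. real n * (\<Sum>d\<in>?Dv. real (degree (Dk D (n div d)))))
        = real n * (\<Sum>d\<in>?Dv. \<Sum>D\<in>?F. real (degree (Dk D (n div d))))"
      by (simp add: sum_distrib_left sum.swap[of _ ?F ?Dv])
    then have "(1 / real (card ?F)) * (\<Sum>D\<in>?F. real n * (\<Sum>d\<in>?Dv. real (degree (Dk D (n div d)))))
        = real n * (\<Sum>d\<in>?Dv. (1 / real (card ?F)) * (\<Sum>D\<in>?F. real (degree (Dk D (n div d)))))"
      by (simp add: sum_distrib_left)
    also have "\<dots> \<le> real n * (\<Sum>d\<in>?Dv. C0)"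
    proof (rule mult_left_mono)
      show "(\<Sum>d\<in>?Dv. (1 / real (card ?F)) * (\<Sum>D\<in>?F. real (degree (Dk D (n div d))))) \<le> (\<Sum>d\<in>?Dv. C0)"
      proof (rule sum_mono)
        fix d assume "d \<in> ?Dv"
        then have "d dvd n" by simp
        then have "n div d \<ge> 1" using n
          by (metis One_nat_def dvd_div_eq_0_iff less_one not_less not_one_le_zero)
        then show "(1 / real (card ?F)) * (\<Sum>D\<in>?F. real (degree (Dk D (n div d)))) \<le> C0" by (rule avg)
      qed
    qed simp
    also have "\<dots> = C0 * real n * real (tau n)" by (simp add: tau_def)
    finally show "(1 / real (card ?F)) * (\<Sum>D\<in>?F. real n * (\<Sum>d | d dvd n. real (degree (Dk D (n div d)))))
        \<le> C0 * real n * real (tau n)" .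
  qed
qed


end
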